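(* Let $A=\Bbbk Q/I$ be a finite-dimensional triangular monomial algebra, let $n\ge 0$, and let $x=\sum_{i=1}^k\alpha_i\,(p_i\|b_i)\in\Bbbk(\Gamma_n\|\mathcal B)$ be an irreducible cocycle (with $\alpha_i\in\Bbbk$ nonzero and the pairs $(p_i,b_i)$ pairwise distinct). Then there exist nontrivial paths $\tilde p$ and $\tilde b$ such that for every $1\le i\le k$ there are $a_i,c_i\in\mathcal B$ with $p_i=c_i\,\tilde p\,a_i$ and $b_i=c_i\,\tilde b\,a_i$.
   Context: Let $\Bbbk$ be a field, $Q=(Q_0,Q_1,s,t)$ a finite quiver, and $A=\Bbbk Q/I$ a finite-dimensional monomial algebra, i.e. $I$ is an ideal generated by paths of length at least $2$. $A$ is triangular if $Q$ has no oriented cycles. Let $E=\Bbbk Q_0$, $A^e=A\otimes_\Bbbk A^{\mathrm{op}}$. Paths are written from right to left ($p=\alpha_n\cdots\alpha_1$, $t(\alpha_i)=s(\alpha_{i+1})$); $qp$ is concatenation. $\mathcal B$ = set of paths not in $I$ (a basis of $A$). If $p=bqa$, $q$ is a divisor; $q\le p$ denotes an occurrence with $\mathrm{pre}_p(q)=a$, $\mathrm{suf}_p(q)=b$; suffix/prefix mean $b$/$a$ trivial; proper means $q\ne p$. For $n\ge -1$, a left $n$-ambiguity is a path $p=u_{-1}u_0\cdots u_n$ with $u_{-1}\in Q_0$, $u_0\in Q_1$, $u_i\in\mathcal B$, and for $0\le i\le n-1$, $u_iu_{i+1}\in I$ while no proper suffix of $u_iu_{i+1}$ lies in $I$; a right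 $n$-ambiguity is $p=v_n\cdots v_0v_{-1}$ with $v_{-1}\in Q_0$, $v_0\in Q_1$, $v_i\in\mathcal B$, $v_{i+1}v_i\in I$ and no proper prefix of $v_{i+1}v_i$ in $I$. These notions coincide; $\Gamma_n$ is the set of $n$-ambiguities; decompositions are unique; $\sigma_m(p):=u_0\cdots u_m$, $\pi_m(p):=v_m\cdots v_0$; $\mathrm{Sub}(p)=\{q\in\Gamma_{n-1}:q\le p\}$. Bardzell's resolution: $\mathbb B(A)_{n+1}=A\otimes_E\Bbbk\Gamma_n\otimes_EA$, with $d(1\otimes p\otimes1)=\sum_{q\in\mathrm{Sub}(p)}\mathrm{suf}_p(q)\otimes q\otimes\mathrm{pre}_p(q)$ for $p\in\Gamma_n$, $n$ odd, and $d(1\otimes p\otimes1)=\mathrm{suf}_p(\pi_{n-1}(p))\otimes\pi_{n-1}(p)\otimes1-1\otimes\sigma_{n-1}(p)\otimes\mathrm{pre}_p(\sigma_{n-1}(p))$ for $n$ even. Let $\Bbbk(\Gamma_n\|\mathcal B):=\mathrm{Hom}_{E^e}(\Bbbk\Gamma_n,A)\cong\mathrm{Hom}_{A^e}(\mathbb B(A)_{n+1},A)$; it has basis the maps $(p\|b)$ for $p\in\Gamma_n$, $b\in\mathcal B$ parallel to $p$ (same source and target), where $(p\|b)(q)=b$ if $q=p$ and $0$ for other $q\in\Gamma_n$. The differential $\partial^{n+1}:\Bbbk(\Gamma_{n}\|\mathcal B)\to\Bbbk(\Gamma_{n+1}\|\mathcal B)$ is $(\partial f)(q)=\hat f(d(1\otimes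 q\otimes 1))$, where $\hat f(c\otimes p\otimes a)=c\,f(p)\,a$ (product in $A$). A cocycle is $x$ with $\partial x=0$. A cocycle $x=\sum_{i=1}^k\alpha_i(p_i\|b_i)$ with all $\alpha_i\ne0$ and the $(p_i\|b_i)$ pairwise distinct is irreducible if for every proper nonempty subsequence $1\le i_1<\dots<i_\ell\le k$ ($\ell<k$) and all nonzero $\beta_1,\dots,\beta_\ell\in\Bbbk$, $\partial\big(\sum_{j=1}^\ell\beta_j(p_{i_j}\|b_{i_j})\big)\neq 0$. *)

theory Defs
  imports Main
begin

record ('v, 'e) quiver =
  verts :: "'v set"
  arrs :: "'e set"
  src_of :: "'e \<Rightarrow> 'v"
  tgt_of :: "'e \<Rightarrow> 'v"

text \<open>A path is a start vertex together with its arrows in order of traversal: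
  (v, [a1, ..., an]) stands for the path an ... a1 (written right to left).
  The trivial path at v is (v, []).\<close>
type_synonym ('v, 'e) path = "'v \<times> 'e list"

definition psrc :: "('v, 'e) path \<Rightarrow> 'v" where
  "psrc p = fst p"

definition ptgt :: "('v, 'e) quiver \<Rightarrow> ('v, 'e) path \<Rightarrow> 'v" where
  "ptgt Q p = (if snd p = [] then fst p else tgt_of Q (last (snd p)))"

definition is_path :: "('v, 'e) quiver \<Rightarrow> ('v, 'e) path \<Rightarrow> bool" where
  "is_path Q p \<longleftrightarrow> fst p \<in> verts Q \<and> set (snd p) \<subseteq> arrs Q
     \<and> (snd p \<noteq> [] \<longrightarrow> src_of Q (hd (snd p)) = fst p)
     \<and> (\<forall>i. Suc i < length (snd p) \<longrightarrow> tgt_of Q (snd p ! i) = src_of Q (snd p ! Suc i))"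

text \<open>Concatenation q p (first p, then q), written qp in the paper.\<close>
definition pcat :: "('v, 'e) path \<Rightarrow> ('v, 'e) path \<Rightarrow> ('v, 'e) path" where
  "pcat q p = (fst p, snd p @ snd q)"

definition composable :: "('v, 'e) quiver \<Rightarrow> ('v, 'e) path \<Rightarrow> ('v, 'e) path \<Rightarrow> bool" where
  "composable Q q p \<longleftrightarrow> ptgt Q p = psrc q"

definition parallel :: "('v, 'e) quiver \<Rightarrow> ('v, 'e) path \<Rightarrow> ('v, 'e) path \<Rightarrow> bool" where
  "parallel Q p b \<longleftrightarrow> psrc p = psrc b \<and> ptgt Q p = ptgt Q b"

definition occ :: "('v, 'e) quiver \<Rightarrow> ('v, 'e) path \<Rightarrow> ('v, 'e) path
    \<Rightarrow> ('v, 'e) path \<Rightarrow> ('v, 'e) path \<Rightarrow> bool" where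
  "occ Q q p c a \<longleftrightarrow> is_path Q c \<and> is_path Q a \<and> is_path Q q \<and>
     composable Q q a \<and> composable Q c q \<and> p = pcat c (pcat q a)"

definition divisor :: "('v, 'e) quiver \<Rightarrow> ('v, 'e) path \<Rightarrow> ('v, 'e) path \<Rightarrow> bool" where
  "divisor Q q p \<longleftrightarrow> (\<exists>c a. occ Q q p c a)"

definition is_suffix :: "('v, 'e) quiver \<Rightarrow> ('v, 'e) path \<Rightarrow> ('v, 'e) path \<Rightarrow> bool" where
  "is_suffix Q q r \<longleftrightarrow> is_path Q q \<and> (\<exists>a. is_path Q a \<and> composable Q q a \<and> r = pcat q a)"

definition is_prefix :: "('v, 'e) quiver \<Rightarrow> ('v, 'e) path \<Rightarrow> ('v, 'e) path \<Rightarrow> bool" where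
  "is_prefix Q q r \<longleftrightarrow> is_path Q q \<and> (\<exists>c. is_path Q c \<and> composable Q c q \<and> r = pcat c q)"

text \<open>The ideal I is generated by the set of paths R; a path lies in the monomial
  ideal I iff it has a divisor in R.\<close>
definition inI :: "('v, 'e) quiver \<Rightarrow> ('v, 'e) path set \<Rightarrow> ('v, 'e) path \<Rightarrow> bool" where
  "inI Q R p \<longleftrightarrow> is_path Q p \<and> (\<exists>r\<in>R. divisor Q r p)"

definition monomial_rels :: "('v, 'e) quiver \<Rightarrow> ('v, 'e) path set \<Rightarrow> bool" where
  "monomial_rels Q R \<longleftrightarrow> (\<forall>r\<in>R. is_path Q r \<and> length (snd r) \<ge> 2)"

definition triangular :: "('v, 'e) quiver \<Rightarrow> bool" where
  "triangular Q \<longleftrightarrow> \<not> (\<exists>p. is_path Q p \<and> snd p \<noteq> [] \<and> ptgt Q p = psrc p)"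

definition basis :: "('v, 'e) quiver \<Rightarrow> ('v, 'e) path set \<Rightarrow> ('v, 'e) path set" where
  "basis Q R = {p. is_path Q p \<and> \<not> inI Q R p}"

text \<open>Left product: ws = [u0, u1, ..., um] gives u0 u1 ... um (um traversed first).\<close>
definition lprod :: "('v, 'e) path list \<Rightarrow> ('v, 'e) path" where
  "lprod ws = (psrc (last ws), concat (rev (map snd ws)))"

text \<open>Right product: ws = [v0, v1, ..., vm] gives vm ... v1 v0 (v0 traversed first).\<close>
definition rprod :: "('v, 'e) path list \<Rightarrow> ('v, 'e) path" where
  "rprod ws = (psrc (hd ws), concat (map snd ws))"

definition arrow_path :: "('v, 'e) quiver \<Rightarrow> 'e \<Rightarrow> ('v, 'e) path" where
  "arrow_path Q e = (src_of Q e, [e])"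

text \<open>Left n-ambiguity decomposition p = u_{-1} u0 u1 ... un, ws = [u0, ..., un]
  (u_{-1} = the vertex t(u0) is implicit).\<close>
definition left_decomp :: "('v, 'e) quiver \<Rightarrow> ('v, 'e) path set \<Rightarrow> nat
    \<Rightarrow> ('v, 'e) path list \<Rightarrow> ('v, 'e) path \<Rightarrow> bool" where
  "left_decomp Q R n ws p \<longleftrightarrow> length ws = Suc n
     \<and> (\<exists>e\<in>arrs Q. ws ! 0 = arrow_path Q e)
     \<and> (\<forall>i\<in>{1..n}. ws ! i \<in> basis Q R)
     \<and> (\<forall>i<n. composable Q (ws ! i) (ws ! Suc i)
           \<and> inI Q R (pcat (ws ! i) (ws ! Suc i))
           \<and> (\<forall>q. is_suffix Q q (pcat (ws ! i) (ws ! Suc i)) \<and> q \<noteq> pcat (ws ! i) (ws ! Suc i)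
                  \<longrightarrow> \<not> inI Q R q))
     \<and> p = lprod ws"

text \<open>Right n-ambiguity decomposition p = vn ... v1 v0 v_{-1}, ws = [v0, ..., vn].\<close>
definition right_decomp :: "('v, 'e) quiver \<Rightarrow> ('v, 'e) path set \<Rightarrow> nat
    \<Rightarrow> ('v, 'e) path list \<Rightarrow> ('v, 'e) path \<Rightarrow> bool" where
  "right_decomp Q R n ws p \<longleftrightarrow> length ws = Suc n
     \<and> (\<exists>e\<in>arrs Q. ws ! 0 = arrow_path Q e)
     \<and> (\<forall>i\<in>{1..n}. ws ! i \<in> basis Q R)
     \<and> (\<forall>i<n. composable Q (ws ! Suc i) (ws ! i)
           \<and> inI Q R (pcat (ws ! Suc i) (ws ! i))
           \<and> (\<forall>q. is_prefix Q q (pcat (ws ! Suc i) (ws ! i)) \<and> q \<noteq> pcat (ws ! Suc i) (ws ! i)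
                  \<longrightarrow> \<not> inI Q R q))
     \<and> p = rprod ws"

text \<open>\<Gamma>_n, the set of n-ambiguities (n \<ge> 0), defined via left ambiguities.\<close>
definition Gamma :: "('v, 'e) quiver \<Rightarrow> ('v, 'e) path set \<Rightarrow> nat \<Rightarrow> ('v, 'e) path set" where
  "Gamma Q R n = {p. \<exists>ws. left_decomp Q R n ws p}"

definition sigma :: "('v, 'e) quiver \<Rightarrow> ('v, 'e) path set \<Rightarrow> nat \<Rightarrow> nat
    \<Rightarrow> ('v, 'e) path \<Rightarrow> ('v, 'e) path" where
  "sigma Q R n m p = (THE r. \<exists>ws. left_decomp Q R n ws p \<and> r = lprod (take (Suc m) ws))"

definition pi_amb :: "('v, 'e) quiver \<Rightarrow> ('v, 'e) path set \<Rightarrow> nat \<Rightarrow> nat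
    \<Rightarrow> ('v, 'e) path \<Rightarrow> ('v, 'e) path" where
  "pi_amb Q R n m p = (THE r. \<exists>ws. right_decomp Q R n ws p \<and> r = rprod (take (Suc m) ws))"

definition pre_of :: "('v, 'e) quiver \<Rightarrow> ('v, 'e) path \<Rightarrow> ('v, 'e) path \<Rightarrow> ('v, 'e) path" where
  "pre_of Q p q = (THE a. is_path Q a \<and> composable Q q a \<and> p = pcat q a)"

definition suf_of :: "('v, 'e) quiver \<Rightarrow> ('v, 'e) path \<Rightarrow> ('v, 'e) path \<Rightarrow> ('v, 'e) path" where
  "suf_of Q p q = (THE c. is_path Q c \<and> composable Q c q \<and> p = pcat c q)"

text \<open>Cochains in \<Bbbk>(\<Gamma>_n || \<B>) are represented by their coefficient functions:
  x p b is the coefficient of the basis element (p||b).\<close>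
type_synonym ('v, 'e, 'k) cochain = "('v, 'e) path \<Rightarrow> ('v, 'e) path \<Rightarrow> 'k"

definition cochain_sum :: "(nat \<Rightarrow> 'k::field) \<Rightarrow> (nat \<Rightarrow> ('v, 'e) path) \<Rightarrow> (nat \<Rightarrow> ('v, 'e) path)
    \<Rightarrow> nat set \<Rightarrow> ('v, 'e, 'k) cochain" where
  "cochain_sum \<alpha> p b J = (\<lambda>q b'. \<Sum>i\<in>J. if (p i, b i) = (q, b') then \<alpha> i else 0)"

text \<open>The differential \<partial>^{n+1} : \<Bbbk>(\<Gamma>_n||\<B>) \<rightarrow> \<Bbbk>(\<Gamma>_{n+1}||\<B>) induced by Bardzell's
  resolution: (\<partial>x)(q) = \<hat>x(d(1 \<otimes> q \<otimes> 1)); (delta x q b') is the coefficient of (q||b').\<close>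
definition delta :: "('v, 'e) quiver \<Rightarrow> ('v, 'e) path set \<Rightarrow> nat
    \<Rightarrow> ('v, 'e, 'k::field) cochain \<Rightarrow> ('v, 'e, 'k) cochain" where
  "delta Q R n x = (\<lambda>q b'.
     if q \<in> Gamma Q R (Suc n) \<and> b' \<in> basis Q R \<and> parallel Q q b' then
       (if odd (Suc n) then
          (\<Sum>(c, q', a)\<in>{(c, q', a). q' \<in> Gamma Q R n \<and> occ Q q' q c a}.
             \<Sum>b\<in>{b \<in> basis Q R. parallel Q q' b}.
               x q' b * (if pcat c (pcat b a) = b' then 1 else 0))
        else
          (let \<pi> = pi_amb Q R (Suc n) n q; \<sigma> = sigma Q R (Suc n) n q;
               sf = suf_of Q q \<pi>; pr = pre_of Q q \<sigma> in
             (\<Sum>b\<in>{b \<in> basis Q R. parallel Q \<pi> b}.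
                x \<pi> b * (if pcat sf b = b' then 1 else 0))
           - (\<Sum>b\<in>{b \<in> basis Q R. parallel Q \<sigma> b}.
                x \<sigma> b * (if pcat b pr = b' then 1 else 0))))
     else 0)"

end

theory Submission
  imports Defs
begin


definition sbl :: "'a list \<Rightarrow> 'a list \<Rightarrow> bool" where "sbl xs ys \<longleftrightarrow> (\<exists>ps ss. ys = ps @ xs @ ss)"
definition pfx :: "'a list \<Rightarrow> 'a list \<Rightarrow> bool" where "pfx xs ys \<longleftrightarrow> (\<exists>zs. ys = xs @ zs)"
definition sfx :: "'a list \<Rightarrow> 'a list \<Rightarrow> bool" where "sfx xs ys \<longleftrightarrow> (\<exists>zs. ys = zs @ xs)"

lemma sbl_trans: "sbl xs ys \<Longrightarrow> sbl ys zs \<Longrightarrow> sbl xs zs"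
  unfolding sbl_def by (metis append.assoc)
lemma sbl_appI[simp, intro]: "sbl xs (ps @ xs @ ss)" unfolding sbl_def by blast
lemma sbl_Nil_right[simp]: "sbl xs [] \<longleftrightarrow> xs = []" unfolding sbl_def by auto
lemma pfx_Nil[simp]: "pfx [] ys" unfolding pfx_def by auto
lemma pfx_Cons[simp]: "pfx (x#xs) (y#ys) \<longleftrightarrow> x = y \<and> pfx xs ys" unfolding pfx_def by auto
lemma pfx_Nil2[simp]: "pfx (x#xs) [] = False" unfolding pfx_def by auto
lemma sfx_rev: "sfx xs ys \<longleftrightarrow> pfx (rev xs) (rev ys)"
  unfolding sfx_def pfx_def by (metis rev_append rev_rev_ident)


locale QS =
  fixes Q :: "('v,'e) quiver" and R :: "('v,'e) path set"
  assumes ends: "\<forall>e\<in>arrs Q. src_of Q e \<in> verts Q \<and> tgt_of Q e \<in> verts Q"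
    and mono: "monomial_rels Q R" and tri: "triangular Q"
begin

lemma chain_Cons:
  "(\<forall>i. Suc i < length (x#xs) \<longrightarrow> tgt_of Q ((x#xs)!i) = src_of Q ((x#xs)!Suc i)) \<longleftrightarrow>
   (xs \<noteq> [] \<longrightarrow> tgt_of Q x = src_of Q (hd xs)) \<and> (\<forall>i. Suc i < length xs \<longrightarrow> tgt_of Q (xs!i) = src_of Q (xs!Suc i))"
proof (intro iffI conjI allI impI)
  assume H: "\<forall>i. Suc i < length (x#xs) \<longrightarrow> tgt_of Q ((x#xs)!i) = src_of Q ((x#xs)!Suc i)"
  show "tgt_of Q x = src_of Q (hd xs)" if "xs \<noteq> []" using H[rule_format, of 0] that by (cases xs) auto
  show "tgt_of Q (xs!i) = src_of Q (xs!Suc i)" if "Suc i < length xs" for i using H[rule_format, of "Suc i"] that by auto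
next
  fix i assume H: "(xs \<noteq> [] \<longrightarrow> tgt_of Q x = src_of Q (hd xs)) \<and> (\<forall>i. Suc i < length xs \<longrightarrow> tgt_of Q (xs!i) = src_of Q (xs!Suc i))"
    and i: "Suc i < length (x#xs)"
  show "tgt_of Q ((x#xs)!i) = src_of Q ((x#xs)!Suc i)"
  proof (cases i)
    case 0 then show ?thesis using H i by (cases xs) auto
  next
    case (Suc j) then show ?thesis using H i by auto
  qed
qed

lemma is_path_Nil[simp]: "is_path Q (v,[]) \<longleftrightarrow> v \<in> verts Q"
  by (simp add: is_path_def)

lemma is_path_Cons:
  "is_path Q (v, x#xs) \<longleftrightarrow> v \<in> verts Q \<and> x \<in> arrs Q \<and> src_of Q x = v \<and> is_path Q (tgt_of Q x, xs)"
  unfolding is_path_def prod.sel chain_Cons using ends by (auto)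

lemma ptgt_Nil[simp]: "ptgt Q (v,[]) = v" by (simp add: ptgt_def)
lemma ptgt_Cons[simp]: "ptgt Q (v, x#xs) = ptgt Q (tgt_of Q x, xs)" by (simp add: ptgt_def)

lemma ptgt_append: "ptgt Q (v, xs @ ys) = ptgt Q (ptgt Q (v,xs), ys)"
  by (induction xs arbitrary: v) auto

lemma is_path_append:
  "is_path Q (v, xs @ ys) \<longleftrightarrow> is_path Q (v, xs) \<and> is_path Q (ptgt Q (v,xs), ys)"
proof (induction xs arbitrary: v)
  case Nil
  then show ?case by (cases ys) (auto simp: is_path_Cons)
next
  case (Cons x xs)
  then show ?case by (auto simp: is_path_Cons)
qed

lemma is_path_vert: "is_path Q p \<Longrightarrow> fst p \<in> verts Q" by (simp add: is_path_def)

lemma ptgt_vert: "is_path Q (v,xs) \<Longrightarrow> ptgt Q (v,xs) \<in> verts Q"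
  by (induction xs arbitrary: v) (auto simp: is_path_Cons)


lemma pcat_sel[simp]: "fst (pcat q p) = fst p" "snd (pcat q p) = snd p @ snd q"
  by (simp_all add: pcat_def)

lemma path_nonempty_src: "is_path Q (v, x#xs) \<Longrightarrow> v = src_of Q x"
  by (simp add: is_path_Cons)

lemma path_src_hd: "is_path Q p \<Longrightarrow> snd p \<noteq> [] \<Longrightarrow> fst p = src_of Q (hd (snd p))"
  by (cases p; cases "snd p") (auto simp: is_path_Cons)

lemma is_path_pcat:
  assumes "composable Q c p"
  shows "is_path Q (pcat c p) \<longleftrightarrow> is_path Q p \<and> is_path Q c"
proof -
  have "pcat c p = (fst p, snd p @ snd c)" by (simp add: pcat_def)
  moreover have "ptgt Q (fst p, snd p) = fst c" using assms by (simp add: composable_def psrc_def)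
  ultimately show ?thesis by (simp add: is_path_append)
qed

lemma ptgt_pcat: "composable Q c p \<Longrightarrow> ptgt Q (pcat c p) = ptgt Q c"
  by (simp add: pcat_def ptgt_append composable_def psrc_def)

lemma rel_path: "r \<in> R \<Longrightarrow> is_path Q r \<and> length (snd r) \<ge> 2"
  using mono by (simp add: monomial_rels_def)

lemma divisor_iff:
  assumes p: "is_path Q p" and r: "is_path Q r" "snd r \<noteq> []"
  shows "divisor Q r p \<longleftrightarrow> sbl (snd r) (snd p)"
proof
  assume "divisor Q r p"
  then obtain c a where "occ Q r p c a" by (auto simp: divisor_def)
  then show "sbl (snd r) (snd p)" by (auto simp: occ_def)
next
  assume "sbl (snd r) (snd p)"
  then obtain xs ys where e: "snd p = xs @ snd r @ ys" by (auto simp: sbl_def)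
  define a where "a = (fst p, xs)"
  define c where "c = (ptgt Q r, ys)"
  have pp: "is_path Q (fst p, xs @ (snd r @ ys))" using p e by (metis prod.collapse)
  hence pa: "is_path Q a" and pr: "is_path Q (ptgt Q a, snd r @ ys)"
    by (simp_all add: is_path_append a_def)
  from pr have pr1: "is_path Q (ptgt Q a, snd r)" and pr2: "is_path Q (ptgt Q (ptgt Q a, snd r), ys)"
    by (simp_all add: is_path_append)
  have "ptgt Q a = src_of Q (hd (snd r))" using path_src_hd[OF pr1] r(2) by simp
  also have "\<dots> = fst r" using path_src_hd[OF r] by simp
  finally have ta: "ptgt Q a = fst r" .
  have rr: "(ptgt Q a, snd r) = r" using ta by simp
  have pc: "is_path Q c" using pr2 rr by (simp add: c_def)
  have "occ Q r p c a"
    unfolding occ_def using pa pc r(1) ta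
    by (auto simp: composable_def psrc_def c_def a_def pcat_def e prod_eq_iff)
  then show "divisor Q r p" unfolding divisor_def by blast
qed

lemma inI_iff: "is_path Q p \<Longrightarrow> inI Q R p \<longleftrightarrow> (\<exists>r\<in>R. sbl (snd r) (snd p))"
  unfolding inI_def using divisor_iff rel_path
  by (metis le_zero_eq length_0_conv zero_neq_numeral)

lemma inI_path: "inI Q R p \<Longrightarrow> is_path Q p" by (simp add: inI_def)

lemma basis_iff: "p \<in> basis Q R \<longleftrightarrow> is_path Q p \<and> \<not>(\<exists>r\<in>R. sbl (snd r) (snd p))"
  unfolding basis_def using inI_iff[of p] by auto

lemma basis_sbl: "p \<in> basis Q R \<Longrightarrow> is_path Q p' \<Longrightarrow> sbl (snd p') (snd p) \<Longrightarrow> p' \<in> basis Q R"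
  unfolding basis_iff using sbl_trans by blast

lemma trivial_basis: "v \<in> verts Q \<Longrightarrow> (v,[]) \<in> basis Q R"
  unfolding basis_iff using rel_path by fastforce

lemma no_cycle: "is_path Q (v, xs) \<Longrightarrow> ptgt Q (v,xs) = v \<Longrightarrow> xs = []"
  using tri unfolding triangular_def by (auto simp: psrc_def)

lemma tri_prefix:
  assumes "is_path Q (v, xs @ ys)" "ptgt Q (v, xs @ ys) = ptgt Q (v, xs)"
  shows "ys = []"
  using assms no_cycle[of "ptgt Q (v,xs)" ys] by (simp add: is_path_append ptgt_append)

lemma tri_suffix:
  assumes "is_path Q (v, xs @ ys)" "is_path Q (v, ys)" "ys \<noteq> []"
  shows "xs = []"
proof -
  from assms(1) have a: "is_path Q (v,xs)" "is_path Q (ptgt Q (v,xs), ys)" by (simp_all add: is_path_append)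
  have "ptgt Q (v,xs) = src_of Q (hd ys)" using path_src_hd[OF a(2)] assms(3) by simp
  also have "\<dots> = v" using path_src_hd[OF assms(2)] assms(3) by simp
  finally show ?thesis using no_cycle a(1) by blast
qed

lemma parallel_noprefix:
  assumes p: "is_path Q p" and b: "is_path Q b" and par: "parallel Q p b" and ne: "p \<noteq> b"
    and pn: "snd p \<noteq> []" and bn: "snd b \<noteq> []"
  shows "\<not> pfx (snd p) (snd b) \<and> \<not> pfx (snd b) (snd p) \<and> \<not> sfx (snd p) (snd b) \<and> \<not> sfx (snd b) (snd p)"
proof -
  obtain v P where pv: "p = (v,P)" by (cases p)
  obtain u B where bu: "b = (u,B)" by (cases b)
  have uv: "u = v" using par by (simp add: parallel_def psrc_def pv bu)
  have tt: "ptgt Q (v,P) = ptgt Q (v,B)" using par by (simp add: parallel_def pv bu uv)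
  have P: "is_path Q (v,P)" and B: "is_path Q (v,B)" using p b pv bu uv by auto
  have neq: "P \<noteq> B" using ne pv bu uv by auto
  have 1: "\<not> pfx P B"
  proof
    assume "pfx P B" then obtain ys where "B = P @ ys" by (auto simp: pfx_def)
    then show False using tri_prefix[of v P ys] B tt neq by auto
  qed
  have 2: "\<not> pfx B P"
  proof
    assume "pfx B P" then obtain ys where "P = B @ ys" by (auto simp: pfx_def)
    then show False using tri_prefix[of v B ys] P tt neq by auto
  qed
  have 3: "\<not> sfx P B"
  proof
    assume "sfx P B" then obtain xs where "B = xs @ P" by (auto simp: sfx_def)
    then show False using tri_suffix[of v xs P] B P pn pv neq by auto
  qed
  have 4: "\<not> sfx B P"
  proof
    assume "sfx B P" then obtain xs where "P = xs @ B" by (auto simp: sfx_def)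
    then show False using tri_suffix[of v xs B] B P bn bu neq by auto
  qed
  show ?thesis using 1 2 3 4 pv bu by simp
qed

end

fun lcp :: "'a list \<Rightarrow> 'a list \<Rightarrow> 'a list" where
  "lcp (x#xs) (y#ys) = (if x = y then x # lcp xs ys else [])"
| "lcp _ _ = []"

lemma lcp_app: "lcp (A @ X) (A @ Y) = A @ lcp X Y"
  by (induction A) auto

lemma lcp_prefix: "pfx (lcp X Y) X \<and> pfx (lcp X Y) Y"
  by (induction X Y rule: lcp.induct) auto

lemma lcp_append_same:
  "\<not> pfx X Y \<Longrightarrow> \<not> pfx Y X \<Longrightarrow> lcp (X @ C) (Y @ D) = lcp X Y"
  by (induction X Y rule: lcp.induct) auto

definition good :: "'a list \<Rightarrow> 'a list \<Rightarrow> bool" where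
  "good P B \<longleftrightarrow> (\<forall>L X Y. P = L @ X \<longrightarrow> B = L @ Y \<longrightarrow>
      \<not> pfx X Y \<and> \<not> pfx Y X \<and> \<not> sfx X Y \<and> \<not> sfx Y X)"

definition core :: "'a list \<Rightarrow> 'a list \<Rightarrow> 'a list \<times> 'a list" where
  "core P B = (let l = length (lcp P B); P1 = drop l P; B1 = drop l B;
      s = length (lcp (rev P1) (rev B1)) in (take (length P1 - s) P1, take (length B1 - s) B1))"

lemma pfx_drop_eq: "pfx L P \<Longrightarrow> P = L @ drop (length L) P"
  by (auto simp: pfx_def)

lemma core_decomp: "\<exists>X Y. P = X @ fst (core P B) @ Y \<and> B = X @ snd (core P B) @ Y"
proof -
  define L where "L = lcp P B"
  define P1 where "P1 = drop (length L) P"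
  define B1 where "B1 = drop (length L) B"
  define M where "M = lcp (rev P1) (rev B1)"
  have P: "P = L @ P1" and B: "B = L @ B1" using lcp_prefix[of P B] pfx_drop_eq
    unfolding L_def P1_def B1_def by blast+
  have "pfx M (rev P1)" "pfx M (rev B1)" using lcp_prefix M_def by blast+
  then obtain P2 B2 where "rev P1 = M @ P2" "rev B1 = M @ B2" by (auto simp: pfx_def)
  hence P1: "P1 = rev P2 @ rev M" and B1: "B1 = rev B2 @ rev M" by (metis rev_append rev_rev_ident)+
  have c: "core P B = (rev P2, rev B2)"
    unfolding core_def Let_def L_def[symmetric] P1_def[symmetric] B1_def[symmetric] M_def[symmetric]
    by (simp add: P1 B1)
  show ?thesis using c P B P1 B1 by auto
qed

lemma core_nonempty:
  assumes "good P B" shows "fst (core P B) \<noteq> []"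
proof
  assume H: "fst (core P B) = []"
  define L where "L = lcp P B"
  define P1 where "P1 = drop (length L) P"
  define B1 where "B1 = drop (length L) B"
  define M where "M = lcp (rev P1) (rev B1)"
  have P: "P = L @ P1" and B: "B = L @ B1" using lcp_prefix[of P B] pfx_drop_eq
    unfolding L_def P1_def B1_def by blast+
  have m1: "pfx M (rev P1)" "pfx M (rev B1)" using lcp_prefix M_def by blast+
  have "fst (core P B) = take (length P1 - length M) P1"
    unfolding core_def Let_def L_def[symmetric] P1_def[symmetric] B1_def[symmetric] M_def[symmetric] by simp
  with H have "length P1 \<le> length M" by auto
  moreover obtain Z where "rev P1 = M @ Z" using m1(1) by (auto simp: pfx_def)
  ultimately have "M = rev P1" by (metis append.right_neutral append_eq_append_conv length_append length_rev le_add1 le_antisym)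
  with m1 have "pfx (rev P1) (rev B1)" by simp
  hence "sfx P1 B1" by (simp add: sfx_rev)
  with assms P B show False unfolding good_def by blast
qed

lemma core_invariant:
  assumes g: "good P B"
  shows "core (A @ P @ C) (A @ B @ C) = core P B"
proof -
  define L where "L = lcp P B"
  define P1 where "P1 = drop (length L) P"
  define B1 where "B1 = drop (length L) B"
  define M where "M = lcp (rev P1) (rev B1)"
  have P: "P = L @ P1" and B: "B = L @ B1" using lcp_prefix[of P B] pfx_drop_eq
    unfolding L_def P1_def B1_def by blast+
  have l1: "lcp (A @ P @ C) (A @ B @ C) = A @ L"
    using lcp_app[of A "P @ C" "B @ C"] lcp_append_same[of P B C C] g[unfolded good_def, rule_format, of "[]" P B] L_def by simp
  have e1: "A @ P @ C = (A @ L) @ (P1 @ C)" using P by (metis append.assoc)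
  have e2: "A @ B @ C = (A @ L) @ (B1 @ C)" using B by (metis append.assoc)
  have d1: "drop (length (A @ L)) (A @ P @ C) = P1 @ C" unfolding e1 by simp
  have d2: "drop (length (A @ L)) (A @ B @ C) = B1 @ C" unfolding e2 by simp
  have ns1: "\<not> pfx (rev P1) (rev B1)"
  proof
    assume "pfx (rev P1) (rev B1)"
    hence "sfx P1 B1" by (simp add: sfx_rev)
    with g P B show False unfolding good_def by blast
  qed
  have ns2: "\<not> pfx (rev B1) (rev P1)"
  proof
    assume "pfx (rev B1) (rev P1)"
    hence "sfx B1 P1" by (simp add: sfx_rev)
    with g P B show False unfolding good_def by blast
  qed
  have l2: "lcp (rev (P1 @ C)) (rev (B1 @ C)) = rev C @ M"
    using lcp_app[of "rev C" "rev P1" "rev B1"] lcp_append_same[OF ns1 ns2] M_def by simp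
  have mP: "length M \<le> length P1" "length M \<le> length B1"
    using lcp_prefix[of "rev P1" "rev B1"] M_def unfolding pfx_def by (metis le_add1 length_append length_rev)+
  show ?thesis
    unfolding core_def Let_def l1 d1 d2 l2
    unfolding L_def[symmetric] P1_def[symmetric] B1_def[symmetric] M_def[symmetric]
    using mP by simp
qed


lemma core_nonempty2:
  assumes "good P B" shows "snd (core P B) \<noteq> []"
proof
  assume H: "snd (core P B) = []"
  define L where "L = lcp P B"
  define P1 where "P1 = drop (length L) P"
  define B1 where "B1 = drop (length L) B"
  define M where "M = lcp (rev P1) (rev B1)"
  have P: "P = L @ P1" and B: "B = L @ B1" using lcp_prefix[of P B] pfx_drop_eq
    unfolding L_def P1_def B1_def by blast+
  have m1: "pfx M (rev P1)" "pfx M (rev B1)" using lcp_prefix M_def by blast+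
  have "snd (core P B) = take (length B1 - length M) B1"
    unfolding core_def Let_def L_def[symmetric] P1_def[symmetric] B1_def[symmetric] M_def[symmetric] by simp
  with H have "length B1 \<le> length M" by auto
  moreover obtain Z where "rev B1 = M @ Z" using m1(2) by (auto simp: pfx_def)
  ultimately have "M = rev B1" by (metis append.right_neutral append_eq_append_conv length_append length_rev le_add1 le_antisym)
  with m1 have "pfx (rev B1) (rev P1)" by simp
  hence "sfx B1 P1" by (simp add: sfx_rev)
  with assms P B show False unfolding good_def by blast
qed

section \<open>Abstract interval combinatorics\<close>

definition monob :: "(nat \<Rightarrow> nat \<Rightarrow> bool) \<Rightarrow> bool" where
  "monob bad \<longleftrightarrow> (\<forall>i i' j j'. i \<le> i' \<longrightarrow> j' \<le> j \<longrightarrow> bad i' j' \<longrightarrow> bad i j) \<and> (\<forall>i j. bad i j \<longrightarrow> i + 2 \<le> j)"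

definition LDc :: "(nat \<Rightarrow> nat \<Rightarrow> bool) \<Rightarrow> nat \<Rightarrow> nat \<Rightarrow> (nat \<Rightarrow> nat) \<Rightarrow> bool" where
  "LDc bad m L A \<longleftrightarrow> A 0 = 0 \<and> Suc (A m) = L \<and> A (Suc m) = L
     \<and> (\<forall>i<m. \<not> bad (A i) (A (Suc i)))
     \<and> (\<forall>i<m. bad (A i) (A (Suc (Suc i))) \<and> \<not> bad (Suc (A i)) (A (Suc (Suc i))))"

definition RDc :: "(nat \<Rightarrow> nat \<Rightarrow> bool) \<Rightarrow> nat \<Rightarrow> nat \<Rightarrow> (nat \<Rightarrow> nat) \<Rightarrow> bool" where
  "RDc bad m L S \<longleftrightarrow> S 0 = 0 \<and> S (Suc 0) = 1 \<and> S (Suc m) = L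
     \<and> (\<forall>i. 1 \<le> i \<and> i \<le> m \<longrightarrow> \<not> bad (S i) (S (Suc i)))
     \<and> (\<forall>i<m. bad (S i) (S (Suc (Suc i))) \<and> \<not> bad (S i) (S (Suc (Suc i)) - 1))"

fun Sg :: "(nat \<Rightarrow> nat \<Rightarrow> bool) \<Rightarrow> nat \<Rightarrow> nat" where
  "Sg bad 0 = 0"
| "Sg bad (Suc 0) = 1"
| "Sg bad (Suc (Suc k)) = (LEAST e. bad (Sg bad k) e)"

lemma monobD: "monob bad \<Longrightarrow> i \<le> i' \<Longrightarrow> j' \<le> j \<Longrightarrow> bad i' j' \<Longrightarrow> bad i j"
  unfolding monob_def by blast

lemma monobD2: "monob bad \<Longrightarrow> bad i j \<Longrightarrow> i + 2 \<le> j"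
  unfolding monob_def by blast

lemma LD_incr:
  assumes mb: "monob bad" and ld: "LDc bad m L A" and i: "i \<le> m"
  shows "A i < A (Suc i)"
proof (cases "i < m")
  case True
  show ?thesis
  proof (rule ccontr)
    assume "\<not> A i < A (Suc i)"
    hence le: "A (Suc i) \<le> A i" by simp
    have "bad (A i) (A (Suc (Suc i)))" using ld True by (simp add: LDc_def)
    hence b: "bad (A (Suc i)) (A (Suc (Suc i)))" using monobD[OF mb le order_refl] by blast
    show False
    proof (cases "Suc i < m")
      case True then show False using ld b by (simp add: LDc_def)
    next
      case False
      hence "Suc i = m" using \<open>i < m\<close> by simp
      hence "A (Suc (Suc i)) = Suc (A (Suc i))" using ld by (simp add: LDc_def)
      then show False using monobD2[OF mb b] by simp
    qed
  qed
next
  case False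
  hence "i = m" using i by simp
  then show ?thesis using ld by (simp add: LDc_def)
qed

lemma Sg_inv:
  assumes mb: "monob bad" and ld: "LDc bad m L A"
  shows "j \<le> m \<Longrightarrow> A j < Sg bad (Suc j) \<and> Sg bad (Suc j) \<le> A (Suc j)"
proof (induction j rule: less_induct)
  case (less j)
  show ?case
  proof (cases j)
    case 0
    have "A 0 < A 1" using LD_incr[OF mb ld, of 0] by simp
    then show ?thesis using 0 ld by (simp add: LDc_def)
  next
    case (Suc j')
    have jm: "j' < m" using less.prems Suc by simp
    have le: "Sg bad j' \<le> A j'"
    proof (cases j')
      case 0 then show ?thesis using ld by (simp add: LDc_def)
    next
      case (Suc j'') then show ?thesis using less.IH[of j''] \<open>j = Suc j'\<close> less.prems by simp
    qed
    have b: "bad (Sg bad j') (A (Suc (Suc j')))"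
      using ld jm monobD[OF mb le order_refl] by (simp add: LDc_def)
    have nb: "\<not> bad (Sg bad j') (A (Suc j'))"
    proof (cases j')
      case 0 then show ?thesis using ld jm unfolding LDc_def by force
    next
      case (Suc j'')
      have "A j'' < Sg bad (Suc j'')" using less.IH[of j''] \<open>j = Suc j'\<close> Suc less.prems by simp
      hence le2: "Suc (A j'') \<le> Sg bad j'" using Suc by simp
      have "\<not> bad (Suc (A j'')) (A (Suc (Suc j'')))" using ld jm Suc by (simp add: LDc_def)
      then show ?thesis using monobD[OF mb le2 order_refl] Suc by blast
    qed
    have e: "Sg bad (Suc j) = (LEAST e. bad (Sg bad j') e)" using Suc by simp
    have bl: "bad (Sg bad j') (Sg bad (Suc j))" unfolding e by (rule LeastI[where P="bad (Sg bad j')", OF b])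
    have ub: "Sg bad (Suc j) \<le> A (Suc j)" unfolding e using Least_le[of "bad (Sg bad j')", OF b] Suc by simp
    have lb: "A j < Sg bad (Suc j)"
    proof (rule ccontr)
      assume "\<not> A j < Sg bad (Suc j)"
      hence "Sg bad (Suc j) \<le> A (Suc j')" using Suc by simp
      then show False using monobD[OF mb order_refl _ bl] nb by blast
    qed
    show ?thesis using lb ub by simp
  qed
qed

lemma Sg_le_A:
  assumes mb: "monob bad" and ld: "LDc bad m L A" and j: "j \<le> m"
  shows "Sg bad j \<le> A j"
proof (cases j)
  case 0 then show ?thesis using ld by (simp add: LDc_def)
next
  case (Suc j') then show ?thesis using Sg_inv[OF mb ld, of j'] j by simp
qed

lemma LD_RD:
  assumes mb: "monob bad" and ld: "LDc bad m L A" and m: "1 \<le> m"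
  shows "RDc bad m L (Sg bad) \<and> (\<forall>j\<le>m. Sg bad j < Sg bad (Suc j))"
proof -
  have sm: "Sg bad (Suc m) = L"
    using Sg_inv[OF mb ld, of m] ld by (simp add: LDc_def)
  have c1: "\<not> bad (Sg bad i) (Sg bad (Suc i))" if a: "1 \<le> i" "i \<le> m" for i
  proof -
    obtain j where i: "i = Suc j" using a by (cases i) auto
    have "A j < Sg bad (Suc j)" using Sg_inv[OF mb ld, of j] that i by simp
    hence l1: "Suc (A j) \<le> Sg bad i" using i by simp
    have l2: "Sg bad (Suc i) \<le> A (Suc (Suc j))" using Sg_inv[OF mb ld, of i] that i by simp
    have "\<not> bad (Suc (A j)) (A (Suc (Suc j)))" using ld that i by (simp add: LDc_def)
    then show ?thesis using monobD[OF mb l1 l2] by blast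
  qed
  have c2: "bad (Sg bad i) (Sg bad (Suc (Suc i))) \<and> \<not> bad (Sg bad i) (Sg bad (Suc (Suc i)) - 1)" if "i < m" for i
  proof -
    have le: "Sg bad i \<le> A i" using Sg_le_A[OF mb ld, of i] that by simp
    have b: "bad (Sg bad i) (A (Suc (Suc i)))"
      using ld that monobD[OF mb le order_refl] by (simp add: LDc_def)
    have pos: "0 < Sg bad (Suc (Suc i))" using Sg_inv[OF mb ld, of "Suc i"] that by simp
    have "bad (Sg bad i) (Sg bad (Suc (Suc i)))" by (simp, rule LeastI[where P="bad (Sg bad i)", OF b])
    moreover have "\<not> bad (Sg bad i) (Sg bad (Suc (Suc i)) - 1)"
    proof -
      have "Sg bad (Suc (Suc i)) - 1 < (LEAST e. bad (Sg bad i) e)" using pos by simp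
      then show ?thesis by (rule not_less_Least)
    qed
    ultimately show ?thesis by simp
  qed
  have c3: "Sg bad j < Sg bad (Suc j)" if "j \<le> m" for j
  proof (cases j)
    case 0 then show ?thesis by simp
  next
    case (Suc j')
    have "Sg bad j \<le> A j" using Sg_inv[OF mb ld, of j'] that Suc by simp
    moreover have "A j < Sg bad (Suc j)" using Sg_inv[OF mb ld, of j] that by simp
    ultimately show ?thesis by simp
  qed
  show ?thesis unfolding RDc_def using sm c1 c2 c3 by simp
qed

lemma RD_unique:
  assumes mb: "monob bad" and r1: "RDc bad m L S" and r2: "RDc bad m L S'"
  shows "j \<le> Suc m \<Longrightarrow> S j = S' j"
proof (induction j rule: less_induct)
  case (less j)
  show ?case
  proof (cases j)
    case 0 then show ?thesis using r1 r2 by (simp add: RDc_def)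
  next
    case (Suc j')
    show ?thesis
    proof (cases j')
      case 0 then show ?thesis using r1 r2 Suc by (simp add: RDc_def)
    next
      case (Suc i)
      have im: "i < m" using less.prems Suc \<open>j = Suc j'\<close> by simp
      have x: "S i = S' i" using less.IH[of i] less.prems Suc \<open>j = Suc j'\<close> by simp
      have a1: "bad (S i) (S (Suc (Suc i)))" "\<not> bad (S i) (S (Suc (Suc i)) - 1)" using r1 im by (simp_all add: RDc_def)
      have a2: "bad (S i) (S' (Suc (Suc i)))" "\<not> bad (S i) (S' (Suc (Suc i)) - 1)" using r2 im x by (simp_all add: RDc_def)
      have "\<not> S (Suc (Suc i)) < S' (Suc (Suc i))"
      proof
        assume "S (Suc (Suc i)) < S' (Suc (Suc i))"
        hence "S (Suc (Suc i)) \<le> S' (Suc (Suc i)) - 1" by simp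
        then show False using monobD[OF mb order_refl _ a1(1)] a2(2) by blast
      qed
      moreover have "\<not> S' (Suc (Suc i)) < S (Suc (Suc i))"
      proof
        assume "S' (Suc (Suc i)) < S (Suc (Suc i))"
        hence "S' (Suc (Suc i)) \<le> S (Suc (Suc i)) - 1" by simp
        then show False using monobD[OF mb order_refl _ a2(1)] a1(2) by blast
      qed
      ultimately show ?thesis using Suc \<open>j = Suc j'\<close> by simp
    qed
  qed
qed

lemma LD_unique_aux:
  assumes mb: "monob bad" and l1: "LDc bad m L A" and l2: "LDc bad m L A'"
  shows "d \<le> Suc m \<Longrightarrow> A (Suc m - d) = A' (Suc m - d)"
proof (induction d rule: less_induct)
  case (less d)
  show ?case
  proof (cases d)
    case 0 then show ?thesis using l1 l2 by (simp add: LDc_def)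
  next
    case (Suc d')
    show ?thesis
    proof (cases d')
      case 0 then show ?thesis using l1 l2 Suc by (simp add: LDc_def)
    next
      case (Suc d'')
      define i where "i = m - d'"
      have im: "i < m" using less.prems Suc \<open>d = Suc d'\<close> i_def by simp
      have ii: "Suc (Suc i) = Suc m - d''" "Suc m - d = i" using less.prems Suc \<open>d = Suc d'\<close> i_def by simp_all
      have x: "A (Suc (Suc i)) = A' (Suc (Suc i))" using less.IH[of d''] less.prems Suc \<open>d = Suc d'\<close> ii by simp
      have a1: "bad (A i) (A (Suc (Suc i)))" "\<not> bad (Suc (A i)) (A (Suc (Suc i)))" using l1 im by (simp_all add: LDc_def)
      have a2: "bad (A' i) (A (Suc (Suc i)))" "\<not> bad (Suc (A' i)) (A (Suc (Suc i)))" using l2 im x by (simp_all add: LDc_def)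
      have "\<not> A i < A' i"
      proof
        assume "A i < A' i" hence "Suc (A i) \<le> A' i" by simp
        then show False using monobD[OF mb _ order_refl a2(1)] a1(2) by blast
      qed
      moreover have "\<not> A' i < A i"
      proof
        assume "A' i < A i" hence "Suc (A' i) \<le> A i" by simp
        then show False using monobD[OF mb _ order_refl a1(1)] a2(2) by blast
      qed
      ultimately show ?thesis using ii by simp
    qed
  qed
qed

lemma LD_unique:
  assumes mb: "monob bad" and l1: "LDc bad m L A" and l2: "LDc bad m L A'" and j: "j \<le> Suc m"
  shows "A j = A' j"
  using LD_unique_aux[OF mb l1 l2, of "Suc m - j"] j by simp


definition cpos :: "'a list list \<Rightarrow> nat \<Rightarrow> nat" where
  "cpos ls i = length (concat (take i ls))"

lemma concat_split: "concat ls = concat (take i ls) @ concat (drop i ls)"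
  by (metis append_take_drop_id concat_append)

lemma take_cpos: "take (cpos ls i) (concat ls) = concat (take i ls)"
  unfolding cpos_def by (subst concat_split[of ls i]) simp

lemma cpos_Suc: "i < length ls \<Longrightarrow> cpos ls (Suc i) = cpos ls i + length (ls!i)"
  unfolding cpos_def by (simp add: take_Suc_conv_app_nth)

lemma cpos_le_len: "cpos ls i \<le> length (concat ls)"
  unfolding cpos_def by (metis concat_split length_append le_add1)

lemma cpos_all: "cpos ls (length ls) = length (concat ls)"
  unfolding cpos_def by simp

lemma cpos_0[simp]: "cpos ls 0 = 0" unfolding cpos_def by simp

lemma cpos_mono: "i \<le> j \<Longrightarrow> cpos ls i \<le> cpos ls j"
  unfolding cpos_def by (metis concat_append le_add1 le_add_diff_inverse length_append take_add)

lemma piece: "i < length ls \<Longrightarrow> ls!i = drop (cpos ls i) (take (cpos ls (Suc i)) (concat ls))"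
  unfolding take_cpos by (simp add: take_Suc_conv_app_nth cpos_def)

lemma seg_app:
  assumes "a \<le> b" "b \<le> c" "c \<le> length w"
  shows "drop a (take b w) @ drop b (take c w) = drop a (take c w)"
proof -
  have e: "take c w = take b w @ drop b (take c w)"
    by (metis append_take_drop_id min.absorb1 take_take assms(2))
  have "length (take b w) = b" using assms by simp
  then show ?thesis by (subst (2) e) (simp add: assms(1))
qed

lemma sbl_take: "sbl (take n xs) xs" unfolding sbl_def by (metis append_Nil append_take_drop_id)
lemma sbl_drop: "sbl (drop n xs) xs" unfolding sbl_def by (metis append.right_neutral append_take_drop_id)

lemma sbl_dt:
  assumes "i \<le> i'" "j' \<le> j"
  shows "sbl (drop i' (take j' w)) (drop i (take j w))"
proof -
  have "drop i' (take j' w) = take (j' - i') (drop i' (take j w))"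
    using assms by (metis drop_take min.absorb1 take_take)
  hence 1: "sbl (drop i' (take j' w)) (drop i' (take j w))" using sbl_take by metis
  have "drop i' (take j w) = drop (i' - i) (drop i (take j w))" using assms by simp
  hence 2: "sbl (drop i' (take j w)) (drop i (take j w))" using sbl_drop by metis
  show ?thesis using sbl_trans[OF 1 2] .
qed

lemma sbl_len: "sbl xs ys \<Longrightarrow> length xs \<le> length ys"
  unfolding sbl_def by auto

context QS begin

definition vat :: "('v,'e) path \<Rightarrow> nat \<Rightarrow> 'v" where
  "vat q i = ptgt Q (fst q, take i (snd q))"
definition seg :: "('v,'e) path \<Rightarrow> nat \<Rightarrow> nat \<Rightarrow> ('v,'e) path" where
  "seg q i j = (vat q i, drop i (take j (snd q)))"
definition badq :: "('v,'e) path \<Rightarrow> nat \<Rightarrow> nat \<Rightarrow> bool" where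
  "badq q i j \<longleftrightarrow> (\<exists>r\<in>R. sbl (snd r) (drop i (take j (snd q))))"

lemma vat0[simp]: "vat q 0 = fst q" by (simp add: vat_def)

lemma seg_path:
  assumes q: "is_path Q q" and ij: "i \<le> j" "j \<le> length (snd q)"
  shows "is_path Q (seg q i j) \<and> ptgt Q (seg q i j) = vat q j"
proof -
  obtain v w where qv: "q = (v, w)" by (cases q)
  have e1: "w = take j w @ drop j w" by simp
  have pj: "is_path Q (v, take j w)" using q qv is_path_append[of v "take j w" "drop j w"] by simp
  have e2: "take j w = take i w @ drop i (take j w)" using ij by (metis append_take_drop_id min.absorb1 take_take)
  have "is_path Q (v, take i w @ drop i (take j w))" using pj e2 by simp
  hence "is_path Q (ptgt Q (v, take i w), drop i (take j w))" by (simp add: is_path_append)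
  moreover have "ptgt Q (ptgt Q (v, take i w), drop i (take j w)) = ptgt Q (v, take j w)"
    using e2 by (metis ptgt_append)
  ultimately show ?thesis by (simp add: seg_def vat_def qv)
qed

lemma badq_monob: "monob (badq q)"
  unfolding monob_def
proof (intro conjI allI impI)
  fix i i' j j' assume a: "i \<le> i'" "j' \<le> j" "badq q i' j'"
  then show "badq q i j" unfolding badq_def using sbl_dt[OF a(1,2)] sbl_trans by blast
next
  fix i j assume "badq q i j"
  then obtain r where r: "r \<in> R" "sbl (snd r) (drop i (take j (snd q)))" by (auto simp: badq_def)
  have "2 \<le> length (snd r)" using rel_path r(1) by simp
  also have "\<dots> \<le> length (drop i (take j (snd q)))" using sbl_len r(2) .
  finally show "i + 2 \<le> j" by simp
qed

lemma inI_seg: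
  assumes "is_path Q q" "i \<le> j" "j \<le> length (snd q)"
  shows "inI Q R (seg q i j) \<longleftrightarrow> badq q i j"
  using inI_iff seg_path[OF assms] by (simp add: badq_def seg_def)

lemma arrow_path_path: "e \<in> arrs Q \<Longrightarrow> is_path Q (arrow_path Q e)"
  using ends by (simp add: arrow_path_def is_path_Cons)

lemma lprod_Cons: "ws \<noteq> [] \<Longrightarrow> lprod (w # ws) = pcat w (lprod ws)"
  by (simp add: lprod_def pcat_def psrc_def)

lemma rprod_Cons: "ws \<noteq> [] \<Longrightarrow> rprod (w # ws) = pcat (rprod ws) w"
  by (simp add: rprod_def pcat_def psrc_def)

lemma lprod_path:
  "ws \<noteq> [] \<Longrightarrow> (\<forall>i<length ws. is_path Q (ws!i)) \<Longrightarrow>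
   (\<forall>i. Suc i < length ws \<longrightarrow> composable Q (ws!i) (ws!Suc i)) \<Longrightarrow>
   is_path Q (lprod ws) \<and> ptgt Q (lprod ws) = ptgt Q (hd ws)"
proof (induction ws)
  case Nil then show ?case by simp
next
  case (Cons w ws)
  show ?case
  proof (cases "ws = []")
    case True
    have "lprod [w] = w" by (simp add: lprod_def psrc_def)
    then show ?thesis using Cons.prems True by force
  next
    case False
    have ih: "is_path Q (lprod ws) \<and> ptgt Q (lprod ws) = ptgt Q (hd ws)"
      using Cons.IH False Cons.prems by fastforce
    have c0: "composable Q w (ws!0)" using Cons.prems(3) False by fastforce
    have cw: "composable Q w (lprod ws)" using c0 ih False by (simp add: composable_def hd_conv_nth)
    have pw: "is_path Q w" using Cons.prems(2) by fastforce
    show ?thesis using lprod_Cons[OF False] is_path_pcat[OF cw] ih pw ptgt_pcat[OF cw] by simp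
  qed
qed

lemma rprod_path:
  "ws \<noteq> [] \<Longrightarrow> (\<forall>i<length ws. is_path Q (ws!i)) \<Longrightarrow>
   (\<forall>i. Suc i < length ws \<longrightarrow> composable Q (ws!Suc i) (ws!i)) \<Longrightarrow>
   is_path Q (rprod ws) \<and> ptgt Q (rprod ws) = ptgt Q (last ws)"
proof (induction ws)
  case Nil then show ?case by simp
next
  case (Cons w ws)
  show ?case
  proof (cases "ws = []")
    case True
    have "rprod [w] = w" by (simp add: rprod_def psrc_def)
    then show ?thesis using Cons.prems True by force
  next
    case False
    have ih: "is_path Q (rprod ws) \<and> ptgt Q (rprod ws) = ptgt Q (last ws)"
      using Cons.IH False Cons.prems by fastforce
    have c0: "composable Q (ws!0) w" using Cons.prems(3) False by fastforce
    have cw: "composable Q (rprod ws) w" using c0 False by (simp add: composable_def hd_conv_nth rprod_def psrc_def)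
    have pw: "is_path Q w" using Cons.prems(2) by fastforce
    show ?thesis using rprod_Cons[OF False] is_path_pcat[OF cw] ih pw ptgt_pcat[OF cw] False by simp
  qed
qed

lemma suffix_cond_drop1:
  assumes p: "is_path Q pr" and e: "snd pr = x # rest"
    and H: "\<forall>q'. is_suffix Q q' pr \<and> q' \<noteq> pr \<longrightarrow> \<not> inI Q R q'"
  shows "\<not> (\<exists>r\<in>R. sbl (snd r) rest)"
proof -
  define q' where "q' = (tgt_of Q x, rest)"
  define a where "a = (fst pr, [x])"
  have "is_path Q (fst pr, [x]) \<and> is_path Q (ptgt Q (fst pr,[x]), rest)"
    using is_path_append[of "fst pr" "[x]" rest] p e by (metis append_Cons append_Nil prod.collapse)
  hence pa: "is_path Q a" and pq: "is_path Q (ptgt Q a, rest)" by (simp_all add: a_def)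
  have ta: "ptgt Q a = tgt_of Q x" by (simp add: a_def)
  have "is_suffix Q q' pr"
    unfolding is_suffix_def using pa pq ta e
    by (auto simp: q'_def composable_def psrc_def pcat_def a_def prod_eq_iff intro!: exI[of _ a])
  moreover have "q' \<noteq> pr" using e by (auto simp: q'_def)
  ultimately have "\<not> inI Q R q'" using H by blast
  then show ?thesis using inI_iff[of q'] pq ta by (simp add: q'_def)
qed

lemma prefix_cond_butlast:
  assumes p: "is_path Q pr" and ne: "snd pr \<noteq> []"
    and H: "\<forall>q'. is_prefix Q q' pr \<and> q' \<noteq> pr \<longrightarrow> \<not> inI Q R q'"
  shows "\<not> (\<exists>r\<in>R. sbl (snd r) (butlast (snd pr)))"
proof -
  define q' where "q' = (fst pr, butlast (snd pr))"
  define c where "c = (ptgt Q q', [last (snd pr)])"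
  have e: "snd pr = butlast (snd pr) @ [last (snd pr)]" using ne by simp
  have "is_path Q (fst pr, butlast (snd pr) @ [last (snd pr)])" using p e by (metis prod.collapse)
  hence pq: "is_path Q q'" and pc: "is_path Q c" by (simp_all add: is_path_append q'_def c_def)
  have "is_prefix Q q' pr"
    unfolding is_prefix_def using pq pc e
    by (auto simp: q'_def c_def composable_def psrc_def pcat_def prod_eq_iff intro!: exI[of _ c])
  moreover have "q' \<noteq> pr"
  proof
    assume "q' = pr"
    hence "butlast (snd pr) = snd pr" by (simp add: q'_def prod_eq_iff)
    moreover have "length (butlast (snd pr)) < length (snd pr)" using ne by simp
    ultimately show False by simp
  qed
  ultimately have "\<not> inI Q R q'" using H by blast
  then show ?thesis using inI_iff[of q'] pq by (simp add: q'_def)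
qed

lemma prefix_cond_intro:
  assumes p: "is_path Q pr" and nb: "\<not> (\<exists>r\<in>R. sbl (snd r) (butlast (snd pr)))"
  shows "\<forall>q'. is_prefix Q q' pr \<and> q' \<noteq> pr \<longrightarrow> \<not> inI Q R q'"
proof (intro allI impI)
  fix q' assume a: "is_prefix Q q' pr \<and> q' \<noteq> pr"
  then obtain c where c: "is_path Q q'" "is_path Q c" "composable Q c q'" "pr = pcat c q'"
    by (auto simp: is_prefix_def)
  have "snd c \<noteq> []" using c(4) a by (auto simp: pcat_def prod_eq_iff)
  hence "butlast (snd pr) = snd q' @ butlast (snd c)" using c(4) by (simp add: butlast_append)
  hence s: "sbl (snd q') (butlast (snd pr))" unfolding sbl_def by (metis append_Nil)
  show "\<not> inI Q R q'"
  proof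
    assume "inI Q R q'"
    then obtain r where "r \<in> R" "sbl (snd r) (snd q')" using inI_iff c(1) by blast
    then show False using nb s sbl_trans by blast
  qed
qed


lemma left_LD:
  assumes ld: "left_decomp Q R m ws q"
  shows "is_path Q q \<and> LDc (badq q) m (length (snd q)) (cpos (map snd (rev ws)))
     \<and> (\<forall>j\<le>m. rev ws ! j = seg q (cpos (map snd (rev ws)) j) (cpos (map snd (rev ws)) (Suc j)))"
proof -
  define ls where "ls = map snd (rev ws)"
  define A where "A = cpos ls"
  have len: "length ws = Suc m" using ld by (simp add: left_decomp_def)
  obtain e where e: "e \<in> arrs Q" "ws!0 = arrow_path Q e" using ld by (auto simp: left_decomp_def)
  have bas: "\<forall>i\<in>{1..m}. ws!i \<in> basis Q R" using ld by (simp add: left_decomp_def)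
  have prc: "\<forall>i<m. composable Q (ws!i) (ws!Suc i) \<and> inI Q R (pcat (ws!i) (ws!Suc i))
      \<and> (\<forall>q'. is_suffix Q q' (pcat (ws ! i) (ws ! Suc i)) \<and> q' \<noteq> pcat (ws ! i) (ws ! Suc i) \<longrightarrow> \<not> inI Q R q')"
    using ld by (simp add: left_decomp_def)
  have qd: "q = lprod ws" using ld by (simp add: left_decomp_def)
  have paths: "\<forall>i<length ws. is_path Q (ws!i)"
  proof (intro allI impI)
    fix i assume il: "i < length ws"
    show "is_path Q (ws!i)"
    proof (cases i)
      case 0 then show ?thesis using e arrow_path_path by simp
    next
      case (Suc i') then show ?thesis using bas il len by (auto simp: basis_def)
    qed
  qed
  have comp: "\<forall>i. Suc i < length ws \<longrightarrow> composable Q (ws!i) (ws!Suc i)" using prc len by simp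
  have wsne: "ws \<noteq> []" using len by auto
  have qp: "is_path Q q" using lprod_path[OF wsne paths comp] qd by simp
  define w where "w = snd q"
  have wc: "w = concat ls" by (simp add: w_def qd lprod_def ls_def rev_map)
  have lsl: "length ls = Suc m" by (simp add: ls_def len)
  have lsn: "ls!j = snd (ws!(m-j))" if "j \<le> m" for j using that len by (simp add: ls_def rev_nth)
  have revn: "rev ws ! j = ws!(m-j)" if "j \<le> m" for j using that len by (simp add: rev_nth)
  have pc: "ls!j = drop (A j) (take (A (Suc j)) w)" if "j \<le> m" for j
    using piece[of j ls] that lsl by (simp add: A_def wc)
  have A0: "A 0 = 0" by (simp add: A_def)
  have AL: "A (Suc m) = length w" using cpos_all[of ls] lsl wc A_def by simp
  have Ale: "A j \<le> length w" for j using cpos_le_len[of ls j] by (simp add: A_def wc)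
  have Amono: "A i \<le> A j" if "i \<le> j" for i j using cpos_mono[OF that] by (simp add: A_def)
  have Am: "Suc (A m) = length w"
    using cpos_Suc[of m ls] lsl lsn[of m] e AL by (simp add: A_def arrow_path_def)
  have nb: "\<not> badq q (A i) (A (Suc i))" if "i < m" for i
  proof -
    have "ws!(m-i) \<in> basis Q R" using bas that by simp
    then have "\<not>(\<exists>r\<in>R. sbl (snd r) (snd (ws!(m-i))))" by (simp add: basis_iff)
    then show ?thesis using lsn[of i] pc[of i] that by (simp add: badq_def w_def)
  qed
  have pair: "ls!i @ ls!(Suc i) = drop (A i) (take (A (Suc (Suc i))) w)" if "i < m" for i
    using pc[of i] pc[of "Suc i"] that seg_app[of "A i" "A (Suc i)" "A (Suc (Suc i))" w] Amono Ale by simp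
  have pairs: "snd (pcat (ws!(m - Suc i)) (ws!Suc (m - Suc i))) = ls!i @ ls!(Suc i)" if "i < m" for i
    using lsn[of i] lsn[of "Suc i"] that by (simp add: Suc_diff_Suc)
  have b2: "badq q (A i) (A (Suc (Suc i))) \<and> \<not> badq q (Suc (A i)) (A (Suc (Suc i)))" if "i < m" for i
  proof -
    define i' where "i' = m - Suc i"
    have i': "i' < m" using that by (simp add: i'_def)
    define pr where "pr = pcat (ws!i') (ws!Suc i')"
    have inp: "inI Q R pr" using prc i' by (simp add: pr_def)
    have prp: "is_path Q pr" using inp by (rule inI_path)
    have sp: "snd pr = drop (A i) (take (A (Suc (Suc i))) w)"
      using pairs[OF that] pair[OF that] by (simp add: pr_def i'_def)
    obtain r where r: "r \<in> R" "sbl (snd r) (snd pr)" using inI_iff prp inp by blast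
    have b: "badq q (A i) (A (Suc (Suc i)))" using r sp by (auto simp: badq_def w_def)
    have "2 \<le> length (snd pr)" using r rel_path sbl_len by (meson order_trans)
    then obtain x rest where xr: "snd pr = x # rest" by (cases "snd pr") auto
    have "\<not>(\<exists>r\<in>R. sbl (snd r) rest)" using suffix_cond_drop1[OF prp xr] prc i' by (simp add: pr_def)
    moreover have "rest = tl (snd pr)" using xr by simp
    moreover have "tl (snd pr) = drop (Suc (A i)) (take (A (Suc (Suc i))) w)"
      unfolding sp by (simp add: drop_Suc tl_drop)
    ultimately show ?thesis using b by (simp add: badq_def w_def)
  qed
  have LD: "LDc (badq q) m (length (snd q)) A"
    unfolding LDc_def using A0 AL Am nb b2 by (simp add: w_def)
  have vt: "\<forall>j\<le>m. rev ws ! j = seg q (A j) (A (Suc j))"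
  proof (intro allI impI)
    fix j assume "j \<le> m"
    then show "rev ws ! j = seg q (A j) (A (Suc j))"
    proof (induction j)
      case 0
      have "fst (ws!m) = fst q" using qd len wsne by (simp add: lprod_def psrc_def last_conv_nth)
      then show ?case using revn[of 0] pc[of 0] lsn[of 0] A0 by (simp add: seg_def prod_eq_iff w_def)
    next
      case (Suc j)
      have jm: "j < m" using Suc.prems by simp
      have ih: "rev ws ! j = seg q (A j) (A (Suc j))" using Suc.IH jm by simp
      have "composable Q (ws!(m - Suc j)) (ws!Suc (m - Suc j))" using prc jm by simp
      hence c: "ptgt Q (ws!(m-j)) = fst (ws!(m - Suc j))" using jm by (simp add: composable_def psrc_def Suc_diff_Suc)
      have "ptgt Q (seg q (A j) (A (Suc j))) = vat q (A (Suc j))"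
        using seg_path[OF qp Amono[of j "Suc j"]] Ale by (simp add: w_def)
      then have "fst (rev ws ! Suc j) = vat q (A (Suc j))" using c ih revn[of j] revn[of "Suc j"] jm by simp
      moreover have "snd (rev ws ! Suc j) = drop (A (Suc j)) (take (A (Suc (Suc j))) (snd q))"
        using pc[of "Suc j"] lsn[of "Suc j"] revn[of "Suc j"] Suc.prems by (simp add: w_def)
      ultimately show ?case by (simp add: seg_def prod_eq_iff)
    qed
  qed
  show ?thesis using qp LD vt by (simp add: A_def ls_def)
qed

lemma right_RD:
  assumes rd: "right_decomp Q R m ws q"
  shows "is_path Q q \<and> RDc (badq q) m (length (snd q)) (cpos (map snd ws))
     \<and> (\<forall>j\<le>m. ws ! j = seg q (cpos (map snd ws) j) (cpos (map snd ws) (Suc j)))"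
proof -
  define ls where "ls = map snd ws"
  define S where "S = cpos ls"
  have len: "length ws = Suc m" using rd by (simp add: right_decomp_def)
  obtain e where e: "e \<in> arrs Q" "ws!0 = arrow_path Q e" using rd by (auto simp: right_decomp_def)
  have bas: "\<forall>i\<in>{1..m}. ws!i \<in> basis Q R" using rd by (simp add: right_decomp_def)
  have prc: "\<forall>i<m. composable Q (ws!Suc i) (ws!i) \<and> inI Q R (pcat (ws!Suc i) (ws!i))
      \<and> (\<forall>q'. is_prefix Q q' (pcat (ws ! Suc i) (ws ! i)) \<and> q' \<noteq> pcat (ws ! Suc i) (ws ! i) \<longrightarrow> \<not> inI Q R q')"
    using rd by (simp add: right_decomp_def)
  have qd: "q = rprod ws" using rd by (simp add: right_decomp_def)
  have paths: "\<forall>i<length ws. is_path Q (ws!i)"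
  proof (intro allI impI)
    fix i assume il: "i < length ws"
    show "is_path Q (ws!i)"
    proof (cases i)
      case 0 then show ?thesis using e arrow_path_path by simp
    next
      case (Suc i') then show ?thesis using bas il len by (auto simp: basis_def)
    qed
  qed
  have comp: "\<forall>i. Suc i < length ws \<longrightarrow> composable Q (ws!Suc i) (ws!i)" using prc len by simp
  have wsne: "ws \<noteq> []" using len by auto
  have qp: "is_path Q q" using rprod_path[OF wsne paths comp] qd by simp
  define w where "w = snd q"
  have wc: "w = concat ls" by (simp add: w_def qd rprod_def ls_def)
  have lsl: "length ls = Suc m" by (simp add: ls_def len)
  have lsn: "ls!j = snd (ws!j)" if "j \<le> m" for j using that len by (simp add: ls_def)
  have pc: "ls!j = drop (S j) (take (S (Suc j)) w)" if "j \<le> m" for j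
    using piece[of j ls] that lsl by (simp add: S_def wc)
  have S0: "S 0 = 0" by (simp add: S_def)
  have SL: "S (Suc m) = length w" using cpos_all[of ls] lsl wc S_def by simp
  have Sle: "S j \<le> length w" for j using cpos_le_len[of ls j] by (simp add: S_def wc)
  have Smono: "S i \<le> S j" if "i \<le> j" for i j using cpos_mono[OF that] by (simp add: S_def)
  have S1: "S (Suc 0) = 1"
    using cpos_Suc[of 0 ls] lsl lsn[of 0] e by (simp add: S_def arrow_path_def)
  have nb: "\<not> badq q (S i) (S (Suc i))" if "1 \<le> i" "i \<le> m" for i
  proof -
    have "ws!i \<in> basis Q R" using bas that by simp
    then have "\<not>(\<exists>r\<in>R. sbl (snd r) (snd (ws!i)))" by (simp add: basis_iff)
    then show ?thesis using lsn[of i] pc[of i] that by (simp add: badq_def w_def)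
  qed
  have pair: "ls!i @ ls!(Suc i) = drop (S i) (take (S (Suc (Suc i))) w)" if "i < m" for i
    using pc[of i] pc[of "Suc i"] that seg_app[of "S i" "S (Suc i)" "S (Suc (Suc i))" w] Smono Sle by simp
  have b2: "badq q (S i) (S (Suc (Suc i))) \<and> \<not> badq q (S i) (S (Suc (Suc i)) - 1)" if "i < m" for i
  proof -
    define pr where "pr = pcat (ws!Suc i) (ws!i)"
    have inp: "inI Q R pr" using prc that by (simp add: pr_def)
    have prp: "is_path Q pr" using inp by (rule inI_path)
    have sp: "snd pr = drop (S i) (take (S (Suc (Suc i))) w)"
      using pair[OF that] lsn[of i] lsn[of "Suc i"] that by (simp add: pr_def)
    obtain r where r: "r \<in> R" "sbl (snd r) (snd pr)" using inI_iff prp inp by blast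
    have b: "badq q (S i) (S (Suc (Suc i)))" using r sp by (auto simp: badq_def w_def)
    have "2 \<le> length (snd pr)" using r rel_path sbl_len by (meson order_trans)
    hence ne: "snd pr \<noteq> []" by auto
    have "\<not>(\<exists>r\<in>R. sbl (snd r) (butlast (snd pr)))" using prefix_cond_butlast[OF prp ne] prc that by (simp add: pr_def)
    moreover have "butlast (snd pr) = drop (S i) (take (S (Suc (Suc i)) - 1) w)"
      unfolding sp using Sle[of "Suc (Suc i)"] by (simp add: butlast_drop butlast_take)
    ultimately show ?thesis using b by (simp add: badq_def w_def)
  qed
  have RD: "RDc (badq q) m (length (snd q)) S"
    unfolding RDc_def using S0 S1 SL nb b2 by (simp add: w_def)
  have vt: "\<forall>j\<le>m. ws ! j = seg q (S j) (S (Suc j))"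
  proof (intro allI impI)
    fix j assume "j \<le> m"
    then show "ws ! j = seg q (S j) (S (Suc j))"
    proof (induction j)
      case 0
      have "fst (ws!0) = fst q" using qd len wsne by (simp add: rprod_def psrc_def hd_conv_nth)
      then show ?case using pc[of 0] lsn[of 0] S0 by (simp add: seg_def prod_eq_iff w_def)
    next
      case (Suc j)
      have jm: "j < m" using Suc.prems by simp
      have ih: "ws ! j = seg q (S j) (S (Suc j))" using Suc.IH jm by simp
      have "composable Q (ws!Suc j) (ws!j)" using prc jm by simp
      hence c: "ptgt Q (ws!j) = fst (ws!Suc j)" by (simp add: composable_def psrc_def)
      have "ptgt Q (seg q (S j) (S (Suc j))) = vat q (S (Suc j))"
        using seg_path[OF qp Smono[of j "Suc j"]] Sle by (simp add: w_def)
      then have "fst (ws ! Suc j) = vat q (S (Suc j))" using c ih by simp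
      moreover have "snd (ws ! Suc j) = drop (S (Suc j)) (take (S (Suc (Suc j))) (snd q))"
        using pc[of "Suc j"] lsn[of "Suc j"] Suc.prems by (simp add: w_def)
      ultimately show ?case by (simp add: seg_def prod_eq_iff)
    qed
  qed
  show ?thesis using qp RD vt by (simp add: S_def ls_def)
qed

lemma left_unique:
  assumes "left_decomp Q R m ws q" "left_decomp Q R m ws' q"
  shows "ws = ws'"
proof -
  note a = left_LD[OF assms(1)] and b = left_LD[OF assms(2)]
  have eq: "cpos (map snd (rev ws)) j = cpos (map snd (rev ws')) j" if "j \<le> Suc m" for j
    using LD_unique[OF badq_monob, of q m "length (snd q)"] a b that by blast
  have l: "length ws = Suc m" "length ws' = Suc m" using assms by (simp_all add: left_decomp_def)
  have "rev ws = rev ws'"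
  proof (rule nth_equalityI)
    show "length (rev ws) = length (rev ws')" using l by simp
    fix j assume "j < length (rev ws)"
    hence j: "j \<le> m" using l by simp
    show "rev ws ! j = rev ws' ! j" using a b j eq[of j] eq[of "Suc j"] by simp
  qed
  then show ?thesis by simp
qed

lemma right_unique:
  assumes "right_decomp Q R m ws q" "right_decomp Q R m ws' q"
  shows "ws = ws'"
proof -
  note a = right_RD[OF assms(1)] and b = right_RD[OF assms(2)]
  have eq: "cpos (map snd ws) j = cpos (map snd ws') j" if "j \<le> Suc m" for j
    using RD_unique[OF badq_monob, of q m "length (snd q)"] a b that by blast
  have l: "length ws = Suc m" "length ws' = Suc m" using assms by (simp_all add: right_decomp_def)
  show ?thesis
  proof (rule nth_equalityI)
    show "length ws = length ws'" using l by simp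
    fix j assume "j < length ws"
    hence j: "j \<le> m" using l by simp
    show "ws ! j = ws' ! j" using a b j eq[of j] eq[of "Suc j"] by simp
  qed
qed


lemma RD_exists:
  assumes qp: "is_path Q q" and ld: "LDc (badq q) m (length (snd q)) A" and m: "1 \<le> m"
  shows "\<exists>ws. right_decomp Q R m ws q"
proof -
  define S where "S = Sg (badq q)"
  have rd: "RDc (badq q) m (length (snd q)) S" and inc: "\<forall>j\<le>m. S j < S (Suc j)"
    using LD_RD[OF badq_monob ld m] by (simp_all add: S_def)
  define w where "w = snd q"
  have Smono: "S i \<le> S j" if "i \<le> j" "j \<le> Suc m" for i j
    using that
  proof (induction j)
    case 0 then show ?case by simp
  next
    case (Suc j)
    show ?case
    proof (cases "i = Suc j")
      case True then show ?thesis by simp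
    next
      case False
      then have "S i \<le> S j" using Suc by simp
      also have "S j < S (Suc j)" using inc Suc.prems by simp
      finally show ?thesis by simp
    qed
  qed
  have SLm: "S (Suc m) = length w" using rd by (simp add: RDc_def w_def)
  have SL: "S j \<le> length w" if "j \<le> Suc m" for j using Smono[OF that order_refl] SLm by simp
  have S0: "S 0 = 0" and S1: "S (Suc 0) = 1" using rd by (simp_all add: RDc_def)
  define ws where "ws = map (\<lambda>j. seg q (S j) (S (Suc j))) [0..<Suc m]"
  have wsn: "ws!j = seg q (S j) (S (Suc j))" if "j \<le> m" for j
    using that by (simp add: ws_def nth_map del: upt_Suc)
  have len: "length ws = Suc m" by (simp add: ws_def)
  have segp: "is_path Q (ws!j) \<and> ptgt Q (ws!j) = vat q (S (Suc j))" if "j \<le> m" for j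
    using wsn[OF that] seg_path[OF qp, of "S j" "S (Suc j)"] Smono[of j "Suc j"] SL[of "Suc j"] that
    by (simp add: w_def)
  have wne: "w \<noteq> []" using SL[of 1] S1 m by auto
  then obtain x xs where wx: "w = x # xs" by (cases w) auto
  have xa: "x \<in> arrs Q" using qp wx by (simp add: is_path_def w_def)
  have fq: "fst q = src_of Q x" using path_src_hd[OF qp] wx by (simp add: w_def)
  have c0: "ws!0 = arrow_path Q x"
    using wsn[of 0] S0 S1 wx fq by (simp add: seg_def arrow_path_def w_def)
  have cb: "ws!i \<in> basis Q R" if "i \<in> {1..m}" for i
  proof -
    have "\<not> badq q (S i) (S (Suc i))" using rd that by (simp add: RDc_def)
    then show ?thesis using segp[of i] that wsn[of i] by (simp add: basis_iff badq_def seg_def)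
  qed
  have cp: "composable Q (ws!Suc i) (ws!i) \<and> inI Q R (pcat (ws!Suc i) (ws!i))
      \<and> (\<forall>q'. is_prefix Q q' (pcat (ws ! Suc i) (ws ! i)) \<and> q' \<noteq> pcat (ws ! Suc i) (ws ! i) \<longrightarrow> \<not> inI Q R q')"
    if im: "i < m" for i
  proof -
    have cmp: "composable Q (ws!Suc i) (ws!i)"
      using segp[of i] wsn[of "Suc i"] im by (simp add: composable_def psrc_def seg_def)
    have l1: "S i \<le> S (Suc i)" "S (Suc i) \<le> S (Suc (Suc i))" "S (Suc (Suc i)) \<le> length w"
      using Smono[of i "Suc i"] Smono[of "Suc i" "Suc (Suc i)"] SL[of "Suc (Suc i)"] im by simp_all
    have pe: "pcat (ws!Suc i) (ws!i) = seg q (S i) (S (Suc (Suc i)))"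
      using wsn[of i] wsn[of "Suc i"] im seg_app[OF l1] by (simp add: pcat_def seg_def w_def)
    have sle: "S i \<le> S (Suc (Suc i))" using l1 by simp
    have bd: "badq q (S i) (S (Suc (Suc i)))" "\<not> badq q (S i) (S (Suc (Suc i)) - 1)"
      using rd im by (simp_all add: RDc_def)
    have inp: "inI Q R (pcat (ws!Suc i) (ws!i))"
      unfolding pe using inI_seg[OF qp sle] l1 bd(1) by (simp add: w_def)
    have pp: "is_path Q (pcat (ws!Suc i) (ws!i))" using inp by (rule inI_path)
    have "butlast (snd (pcat (ws!Suc i) (ws!i))) = drop (S i) (take (S (Suc (Suc i)) - 1) w)"
      unfolding pe using l1 by (simp add: seg_def butlast_drop butlast_take w_def)
    hence "\<not> (\<exists>r\<in>R. sbl (snd r) (butlast (snd (pcat (ws!Suc i) (ws!i)))))"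
      using bd(2) by (simp add: badq_def w_def)
    from prefix_cond_intro[OF pp this] show ?thesis using cmp inp by simp
  qed
  have tele: "concat (map (\<lambda>j. drop (S j) (take (S (Suc j)) w)) [0..<k]) = drop (S 0) (take (S k) w)"
    if "k \<le> Suc m" for k
    using that
  proof (induction k)
    case 0 then show ?case using S0 by simp
  next
    case (Suc k)
    have "concat (map (\<lambda>j. drop (S j) (take (S (Suc j)) w)) [0..<Suc k])
        = drop (S 0) (take (S k) w) @ drop (S k) (take (S (Suc k)) w)" using Suc by simp
    also have "\<dots> = drop (S 0) (take (S (Suc k)) w)"
      using seg_app[of "S 0" "S k" "S (Suc k)" w] Smono[of 0 k] Smono[of k "Suc k"] SL[of "Suc k"] Suc.prems by simp
    finally show ?case .
  qed
  have "concat (map snd ws) = w"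
  proof -
    have "map snd ws = map (\<lambda>j. drop (S j) (take (S (Suc j)) w)) [0..<Suc m]"
      by (simp add: ws_def seg_def w_def del: upt_Suc)
    then show ?thesis using tele[of "Suc m"] S0 SLm by simp
  qed
  moreover have "psrc (hd ws) = fst q"
  proof -
    have "ws \<noteq> []" using len by auto
    then show ?thesis using wsn[of 0] S0 by (simp add: hd_conv_nth psrc_def seg_def)
  qed
  ultimately have qr: "q = rprod ws" by (simp add: rprod_def w_def prod_eq_iff)
  have "right_decomp Q R m ws q"
    unfolding right_decomp_def using len c0 xa cb cp qr by auto
  then show ?thesis by blast
qed

lemma sigma_prop:
  assumes qG: "q \<in> Gamma Q R (Suc n)"
  shows "q = pcat (sigma Q R (Suc n) n q) (pre_of Q q (sigma Q R (Suc n) n q))"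
proof -
  obtain ws where ld: "left_decomp Q R (Suc n) ws q" using qG by (auto simp: Gamma_def)
  define s0 where "s0 = lprod (take (Suc n) ws)"
  have sg: "sigma Q R (Suc n) n q = s0"
    unfolding sigma_def s0_def
    by (rule the_equality) (use ld left_unique in blast)+
  have len: "length ws = Suc (Suc n)" using ld by (simp add: left_decomp_def)
  define a where "a = ws ! Suc n"
  have wsplit: "ws = take (Suc n) ws @ [a]"
    using len by (metis a_def lessI take_Suc_conv_app_nth take_all order_refl)
  have qd: "q = lprod ws" using ld by (simp add: left_decomp_def)
  have q1: "q = pcat s0 a"
  proof -
    have "lprod ws = lprod (take (Suc n) ws @ [a])" using wsplit by simp
    also have "\<dots> = pcat s0 a" by (simp add: lprod_def pcat_def s0_def psrc_def)
    finally show ?thesis using qd by simp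
  qed
  have ap: "is_path Q a" using ld by (auto simp: left_decomp_def a_def basis_def)
  have "composable Q (ws!n) (ws!Suc n)" using ld by (simp add: left_decomp_def)
  moreover have "last (take (Suc n) ws) = ws!n" using len by (subst last_conv_nth) (auto simp: min_def)
  ultimately have ca: "composable Q s0 a"
    by (simp add: composable_def s0_def lprod_def psrc_def a_def)
  have pre: "pre_of Q q s0 = a"
    unfolding pre_of_def
  proof (rule the_equality)
    show "is_path Q a \<and> composable Q s0 a \<and> q = pcat s0 a" using ap ca q1 by simp
  next
    fix a' assume "is_path Q a' \<and> composable Q s0 a' \<and> q = pcat s0 a'"
    then show "a' = a" using q1 by (auto simp: pcat_def prod_eq_iff)
  qed
  show ?thesis using sg pre q1 by simp
qed

lemma pi_prop:
  assumes qG: "q \<in> Gamma Q R (Suc n)"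
  shows "q = pcat (suf_of Q q (pi_amb Q R (Suc n) n q)) (pi_amb Q R (Suc n) n q)"
proof -
  obtain wl where ld: "left_decomp Q R (Suc n) wl q" using qG by (auto simp: Gamma_def)
  note L = left_LD[OF ld]
  obtain ws where rd: "right_decomp Q R (Suc n) ws q" using RD_exists[of q "Suc n" "cpos (map snd (rev wl))"] L by auto
  define p0 where "p0 = rprod (take (Suc n) ws)"
  have pa: "pi_amb Q R (Suc n) n q = p0"
    unfolding pi_amb_def p0_def
    by (rule the_equality) (use rd right_unique in blast)+
  have len: "length ws = Suc (Suc n)" using rd by (simp add: right_decomp_def)
  define c where "c = ws ! Suc n"
  have wsplit: "ws = take (Suc n) ws @ [c]"
    using len by (metis c_def lessI take_Suc_conv_app_nth take_all order_refl)
  have qd: "q = rprod ws" using rd by (simp add: right_decomp_def)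
  have q1: "q = pcat c p0"
  proof -
    have "rprod ws = rprod (take (Suc n) ws @ [c])" using wsplit by simp
    also have "\<dots> = pcat c p0" using len by (cases ws) (auto simp: rprod_def pcat_def p0_def psrc_def hd_append)
    finally show ?thesis using qd by simp
  qed
  have cp: "is_path Q c" using rd by (auto simp: right_decomp_def c_def basis_def)
  have tne: "take (Suc n) ws \<noteq> []" using len by (cases ws) auto
  have paths: "\<forall>i<length (take (Suc n) ws). is_path Q (take (Suc n) ws ! i)"
  proof (intro allI impI)
    fix i assume "i < length (take (Suc n) ws)"
    hence i: "i \<le> n" using len by simp
    show "is_path Q (take (Suc n) ws ! i)"
    proof (cases i)
      case 0 then show ?thesis using rd arrow_path_path by (auto simp: right_decomp_def)
    next
      case (Suc i') then show ?thesis using rd i by (auto simp: right_decomp_def basis_def)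
    qed
  qed
  have comps: "\<forall>i. Suc i < length (take (Suc n) ws) \<longrightarrow> composable Q (take (Suc n) ws ! Suc i) (take (Suc n) ws ! i)"
    using rd len by (simp add: right_decomp_def)
  have lt: "last (take (Suc n) ws) = ws!n" using len by (subst last_conv_nth) (auto simp: min_def)
  have t0: "ptgt Q p0 = ptgt Q (ws!n)"
    using rprod_path[OF tne paths comps] lt by (simp add: p0_def)
  have "composable Q (ws!Suc n) (ws!n)" using rd by (simp add: right_decomp_def)
  hence cc: "composable Q c p0" using t0 by (simp add: composable_def c_def)
  have suf: "suf_of Q q p0 = c"
    unfolding suf_of_def
  proof (rule the_equality)
    show "is_path Q c \<and> composable Q c p0 \<and> q = pcat c p0" using cp cc q1 by simp
  next
    fix c' assume "is_path Q c' \<and> composable Q c' p0 \<and> q = pcat c' p0"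
    then show "c' = c" using q1 cc by (auto simp: pcat_def prod_eq_iff composable_def psrc_def)
  qed
  show ?thesis using pa suf q1 by simp
qed


lemma delta_local:
  assumes C: "\<And>q'' bb X Y. snd q = X @ snd q'' @ Y \<Longrightarrow> snd b' = X @ snd bb @ Y \<Longrightarrow> y q'' bb = y' q'' bb"
  shows "delta Q R n y q b' = delta Q R n y' q b'"
proof (cases "q \<in> Gamma Q R (Suc n) \<and> b' \<in> basis Q R \<and> parallel Q q b'")
  case False show ?thesis unfolding delta_def if_not_P[OF False] by (rule refl)
next
  case True
  hence qG: "q \<in> Gamma Q R (Suc n)" by simp
  define pi where "pi = pi_amb Q R (Suc n) n q"
  define sg where "sg = sigma Q R (Suc n) n q"
  define sf where "sf = suf_of Q q pi"
  define pr where "pr = pre_of Q q sg"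
  have qpi: "q = pcat sf pi" using pi_prop[OF qG] by (simp add: sf_def pi_def)
  have qsg: "q = pcat sg pr" using sigma_prop[OF qG] by (simp add: pr_def sg_def)
  have e1: "y q' bb * (if pcat c (pcat bb a) = b' then 1 else 0) = y' q' bb * (if pcat c (pcat bb a) = b' then 1 else 0)"
    if "occ Q q' q c a" for c q' a bb
  proof (cases "pcat c (pcat bb a) = b'")
    case True
    have "snd q = snd a @ snd q' @ snd c" using that by (auto simp: occ_def)
    moreover have "snd b' = snd a @ snd bb @ snd c" using True by auto
    ultimately show ?thesis using C by simp
  qed simp
  have e2: "y pi bb * (if pcat sf bb = b' then 1 else 0) = y' pi bb * (if pcat sf bb = b' then 1 else 0)" for bb
  proof (cases "pcat sf bb = b'")
    case True
    have "snd q = [] @ snd pi @ snd sf" using qpi by (metis append_Nil pcat_sel(2))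
    moreover have "snd b' = [] @ snd bb @ snd sf" using True by auto
    ultimately have "y pi bb = y' pi bb" by (rule C)
    then show ?thesis by simp
  qed simp
  have e3: "y sg bb * (if pcat bb pr = b' then 1 else 0) = y' sg bb * (if pcat bb pr = b' then 1 else 0)" for bb
  proof (cases "pcat bb pr = b'")
    case True
    have "snd q = snd pr @ snd sg @ []" using qsg by (metis append_Nil2 pcat_sel(2))
    moreover have "snd b' = snd pr @ snd bb @ []" using True by auto
    ultimately have "y sg bb = y' sg bb" by (rule C)
    then show ?thesis by simp
  qed simp
  have s1: "(\<Sum>(c, q', a)\<in>{(c, q', a). q' \<in> Gamma Q R n \<and> occ Q q' q c a}.
             \<Sum>b\<in>{b \<in> basis Q R. parallel Q q' b}. y q' b * (if pcat c (pcat b a) = b' then 1 else 0))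
    = (\<Sum>(c, q', a)\<in>{(c, q', a). q' \<in> Gamma Q R n \<and> occ Q q' q c a}.
             \<Sum>b\<in>{b \<in> basis Q R. parallel Q q' b}. y' q' b * (if pcat c (pcat b a) = b' then 1 else 0))"
    by (rule sum.cong[OF refl]) (auto intro!: sum.cong e1)
  have D: "delta Q R n z q b' = (if odd (Suc n) then
          (\<Sum>(c, q', a)\<in>{(c, q', a). q' \<in> Gamma Q R n \<and> occ Q q' q c a}.
             \<Sum>b\<in>{b \<in> basis Q R. parallel Q q' b}. z q' b * (if pcat c (pcat b a) = b' then 1 else 0))
        else (\<Sum>b\<in>{b \<in> basis Q R. parallel Q pi b}. z pi b * (if pcat sf b = b' then 1 else 0))
           - (\<Sum>b\<in>{b \<in> basis Q R. parallel Q sg b}. z sg b * (if pcat b pr = b' then 1 else 0)))" for z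
    unfolding delta_def Let_def pi_def sg_def sf_def pr_def using True by (simp only: if_True simp_thms)
  show ?thesis
    unfolding D by (simp only: s1 e2 e3)
qed

lemma delta_zero: "delta Q R n (\<lambda>_ _. 0) q b' = 0"
  by (simp add: delta_def)

lemma badq_inI: "is_path Q q \<Longrightarrow> badq q i j \<Longrightarrow> inI Q R q"
  unfolding badq_def using inI_iff sbl_trans sbl_drop sbl_take by meson

lemma gamma_path: "q \<in> Gamma Q R n \<Longrightarrow> is_path Q q \<and> snd q \<noteq> []"
proof -
  assume "q \<in> Gamma Q R n"
  then obtain ws where ld: "left_decomp Q R n ws q" by (auto simp: Gamma_def)
  from left_LD[OF ld] show ?thesis by (auto simp: LDc_def)
qed

lemma gamma_not_basis: "q \<in> Gamma Q R (Suc n) \<Longrightarrow> q \<notin> basis Q R"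
proof -
  assume "q \<in> Gamma Q R (Suc n)"
  then obtain ws where ld: "left_decomp Q R (Suc n) ws q" by (auto simp: Gamma_def)
  note L = left_LD[OF ld]
  then have "badq q (cpos (map snd (rev ws)) 0) (cpos (map snd (rev ws)) (Suc (Suc 0)))"
    unfolding LDc_def by blast
  then show ?thesis using badq_inI L by (simp add: basis_def)
qed

lemma parallel_good:
  assumes p: "is_path Q p" and b: "is_path Q b" and par: "parallel Q p b" and ne: "p \<noteq> b"
    and pn: "snd p \<noteq> []" and bn: "snd b \<noteq> []"
  shows "good (snd p) (snd b)"
  unfolding good_def
proof (intro allI impI)
  fix L X Y assume e: "snd p = L @ X" "snd b = L @ Y"
  obtain v P where pv: "p = (v,P)" by (cases p)
  obtain u B where bu: "b = (u,B)" by (cases b)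
  have uv: "u = v" using par by (simp add: parallel_def psrc_def pv bu)
  have tt: "ptgt Q (v,P) = ptgt Q (v,B)" using par by (simp add: parallel_def pv bu uv)
  note np = parallel_noprefix[OF p b par ne pn bn]
  define w where "w = ptgt Q (v, L)"
  have px: "is_path Q (w, X)" using p e pv by (simp add: is_path_append w_def)
  have py: "is_path Q (w, Y)" using b e bu uv by (simp add: is_path_append w_def)
  have tx: "ptgt Q (w, X) = ptgt Q (w, Y)" using tt e pv bu by (simp add: ptgt_append w_def)
  show "\<not> pfx X Y \<and> \<not> pfx Y X \<and> \<not> sfx X Y \<and> \<not> sfx Y X"
  proof (cases "X = [] \<or> Y = []")
    case True
    then show ?thesis using np e unfolding pfx_def by auto
  next
    case False
    have "(w,X) \<noteq> (w,Y)" using ne e pv bu uv by auto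
    moreover have "parallel Q (w,X) (w,Y)" using tx by (simp add: parallel_def psrc_def)
    ultimately show ?thesis using parallel_noprefix[OF px py] False by simp
  qed
qed

lemma final_decomp:
  assumes p: "is_path Q p" and b: "b \<in> basis Q R" and par: "parallel Q p b"
    and P0: "P0 \<noteq> []" and B0: "B0 \<noteq> []"
    and ep: "snd p = X @ P0 @ Y" and eb: "snd b = X @ B0 @ Y"
  shows "is_path Q (src_of Q (hd P0), P0) \<and> is_path Q (src_of Q (hd B0), B0)
    \<and> ptgt Q (src_of Q (hd P0), P0) = ptgt Q (src_of Q (hd B0), B0)
    \<and> src_of Q (hd P0) = src_of Q (hd B0)
    \<and> (\<exists>a c. a \<in> basis Q R \<and> c \<in> basis Q R \<and>
        composable Q (src_of Q (hd P0), P0) a \<and> composable Q c (src_of Q (hd P0), P0) \<and>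
        composable Q (src_of Q (hd B0), B0) a \<and> composable Q c (src_of Q (hd B0), B0) \<and>
        p = pcat c (pcat (src_of Q (hd P0), P0) a) \<and> b = pcat c (pcat (src_of Q (hd B0), B0) a))"
proof -
  have bp: "is_path Q b" using b by (simp add: basis_def)
  obtain v where pv: "p = (v, X @ P0 @ Y)" using ep by (metis prod.collapse)
  have bv: "b = (v, X @ B0 @ Y)" using eb par pv by (metis fst_conv parallel_def prod.collapse psrc_def)
  define w0 where "w0 = ptgt Q (v, X)"
  have pa: "is_path Q (v, X)" and p1: "is_path Q (w0, P0 @ Y)"
    using p pv by (simp_all add: is_path_append w0_def)
  have p2: "is_path Q (w0, P0)" and p3: "is_path Q (ptgt Q (w0, P0), Y)"
    using p1 by (simp_all add: is_path_append)
  have b1: "is_path Q (w0, B0 @ Y)" using bp bv by (simp add: is_path_append w0_def)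
  have b2: "is_path Q (w0, B0)" and b3: "is_path Q (ptgt Q (w0, B0), Y)"
    using b1 by (simp_all add: is_path_append)
  have wP: "w0 = src_of Q (hd P0)" using path_src_hd[OF p2] P0 by simp
  have wB: "w0 = src_of Q (hd B0)" using path_src_hd[OF b2] B0 by simp
  have tt: "ptgt Q (w0, P0) = ptgt Q (w0, B0)"
  proof (cases "Y = []")
    case True
    have "ptgt Q p = ptgt Q b" using par by (simp add: parallel_def)
    then show ?thesis using True pv bv by (simp add: ptgt_append w0_def)
  next
    case False
    show ?thesis using path_src_hd[OF p3] path_src_hd[OF b3] False by simp
  qed
  define a where "a = (v, X)"
  define c where "c = (ptgt Q (w0, P0), Y)"
  have ab: "a \<in> basis Q R" using basis_sbl[OF b pa] eb unfolding a_def sbl_def by (metis append_Nil snd_conv)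
  have cb: "c \<in> basis Q R" using basis_sbl[OF b p3] eb unfolding c_def sbl_def
    by (metis append.assoc append_Nil2 snd_conv)
  show ?thesis
    using p2 b2 tt wP wB ab cb pv bv
    by (auto simp: a_def c_def composable_def psrc_def pcat_def w0_def intro!: exI[of _ a] exI[of _ c])
qed


lemma delta_invalid:
  assumes "\<not> (q \<in> Gamma Q R (Suc n) \<and> b' \<in> basis Q R \<and> parallel Q q b')"
  shows "delta Q R n y q b' = 0"
  unfolding delta_def if_not_P[OF assms] by (rule refl)


end


context QS begin
lemma main_locale:
  fixes n k :: nat and \<alpha> :: "nat \<Rightarrow> 'k::field" and p b :: "nat \<Rightarrow> ('v,'e) path"
  assumes k1: "k \<ge> 1"
    and pb: "\<forall>i\<in>{1..k}. p i \<in> Gamma Q R n \<and> b i \<in> basis Q R \<and> parallel Q (p i) (b i)"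
    and an: "\<forall>i\<in>{1..k}. \<alpha> i \<noteq> 0"
    and cyc: "delta Q R n (cochain_sum \<alpha> p b {1..k}) = (\<lambda>_ _. 0)"
    and irr: "\<forall>J (\<beta> :: nat \<Rightarrow> 'k). J \<subseteq> {1..k} \<and> J \<noteq> {} \<and> J \<noteq> {1..k} \<and> (\<forall>j\<in>J. \<beta> j \<noteq> 0)
           \<longrightarrow> delta Q R n (cochain_sum \<beta> p b J) \<noteq> (\<lambda>_ _. 0)"
  shows "\<exists>pt bt. is_path Q pt \<and> snd pt \<noteq> [] \<and> is_path Q bt \<and> snd bt \<noteq> [] \<and>
     (\<forall>i\<in>{1..k}. \<exists>a c. a \<in> basis Q R \<and> c \<in> basis Q R \<and>
        composable Q pt a \<and> composable Q c pt \<and> composable Q bt a \<and> composable Q c bt \<and>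
        p i = pcat c (pcat pt a) \<and> b i = pcat c (pcat bt a))"
proof -
  have pP: "is_path Q (p i) \<and> snd (p i) \<noteq> []" if "i \<in> {1..k}" for i using gamma_path pb that by blast
  have bP: "is_path Q (b i)" if "i \<in> {1..k}" for i using pb that by (simp add: basis_def)
  have bN: "snd (b i) \<noteq> []" if i: "i \<in> {1..k}" for i
  proof
    assume e: "snd (b i) = []"
    have par: "parallel Q (p i) (b i)" using pb i by simp
    have "ptgt Q (b i) = fst (b i)" using e by (simp add: ptgt_def)
    hence "ptgt Q (p i) = fst (p i)" using par by (simp add: parallel_def psrc_def)
    hence "snd (p i) = []" using no_cycle[of "fst (p i)" "snd (p i)"] pP[OF i] by simp
    then show False using pP[OF i] by simp
  qed
  define cr where "cr i = core (snd (p i)) (snd (b i))" for i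
  have contrib: "p i \<noteq> b i \<and> core (snd q) (snd b') = cr i"
    if "i \<in> {1..k}" "q \<in> Gamma Q R (Suc n)" "b' \<in> basis Q R" "parallel Q q b'"
       "snd q = X @ snd (p i) @ Y" "snd b' = X @ snd (b i) @ Y" for i q b' X Y
  proof -
    have ne: "p i \<noteq> b i"
    proof
      assume "p i = b i"
      hence "snd q = snd b'" using that by simp
      moreover have "fst q = fst b'" using that(4) by (simp add: parallel_def psrc_def)
      ultimately have "q = b'" by (simp add: prod_eq_iff)
      then show False using gamma_not_basis that(2,3) by blast
    qed
    have g: "good (snd (p i)) (snd (b i))" using parallel_good pP bP bN pb ne that(1) by blast
    show ?thesis using ne core_invariant[OF g, of X Y] that(5,6) by (simp add: cr_def)
  qed
  define J where "J = {j \<in> {1..k}. cr j = cr 1}"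
  have dJ: "delta Q R n (cochain_sum \<alpha> p b J) = (\<lambda>_ _. 0)"
  proof (intro ext)
    fix q b'
    show "delta Q R n (cochain_sum \<alpha> p b J) q b' = 0"
    proof (cases "q \<in> Gamma Q R (Suc n) \<and> b' \<in> basis Q R \<and> parallel Q q b'")
      case False then show ?thesis by (rule delta_invalid)
    next
      case V: True
      show ?thesis
      proof (cases "core (snd q) (snd b') = cr 1")
        case Tc: True
        have "delta Q R n (cochain_sum \<alpha> p b J) q b' = delta Q R n (cochain_sum \<alpha> p b {1..k}) q b'"
        proof (rule delta_local)
          fix q'' bb :: "('v,'e) path" and X Y assume h: "snd q = X @ snd q'' @ Y" "snd b' = X @ snd bb @ Y"
          show "cochain_sum \<alpha> p b J q'' bb = cochain_sum \<alpha> p b {1..k} q'' bb"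
            unfolding cochain_sum_def
          proof (rule sum.mono_neutral_left)
            show "finite {1..k}" by simp
            show "J \<subseteq> {1..k}" by (auto simp: J_def)
            show "\<forall>i\<in>{1..k} - J. (if (p i, b i) = (q'', bb) then \<alpha> i else 0) = 0"
            proof
              fix i assume i: "i \<in> {1..k} - J"
              show "(if (p i, b i) = (q'', bb) then \<alpha> i else 0) = 0"
              proof (cases "(p i, b i) = (q'', bb)")
                case eq: True
                then have "core (snd q) (snd b') = cr i" using contrib[of i q b' X Y] i V h by auto
                then have "i \<in> J" using Tc i by (simp add: J_def)
                then show ?thesis using i by simp
              qed auto
            qed
          qed
        qed
        also have "\<dots> = 0" using cyc by simp
        finally show ?thesis .
      next
        case Fc: False
        have "delta Q R n (cochain_sum \<alpha> p b J) q b' = delta Q R n (\<lambda>_ _. 0) q b'"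
        proof (rule delta_local)
          fix q'' bb :: "('v,'e) path" and X Y assume h: "snd q = X @ snd q'' @ Y" "snd b' = X @ snd bb @ Y"
          show "cochain_sum \<alpha> p b J q'' bb = 0"
            unfolding cochain_sum_def
          proof (rule sum.neutral, rule ballI)
            fix i assume i: "i \<in> J"
            show "(if (p i, b i) = (q'', bb) then \<alpha> i else 0) = 0"
            proof (cases "(p i, b i) = (q'', bb)")
              case eq: True
              then have "core (snd q) (snd b') = cr i" using contrib[of i q b' X Y] i V h by (auto simp: J_def)
              then show ?thesis using Fc i by (simp add: J_def)
            qed auto
          qed
        qed
        then show ?thesis using delta_zero by simp
      qed
    qed
  qed
  have J1: "1 \<in> J" using k1 by (simp add: J_def)
  have JJ: "J = {1..k}"
  proof (rule ccontr)
    assume "J \<noteq> {1..k}"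
    moreover have sub: "J \<subseteq> {1..k}" by (auto simp: J_def)
    moreover have "J \<noteq> {}" using J1 by auto
    moreover have "\<forall>j\<in>J. \<alpha> j \<noteq> 0" using an sub by auto
    ultimately have "J \<subseteq> {1..k} \<and> J \<noteq> {} \<and> J \<noteq> {1..k} \<and> (\<forall>j\<in>J. \<alpha> j \<noteq> 0)" by (intro conjI)
    hence "delta Q R n (cochain_sum \<alpha> p b J) \<noteq> (\<lambda>_ _. 0)"
      by (rule irr[THEN spec, THEN spec, THEN mp])
    with dJ show False by simp
  qed
  have allcore: "\<forall>i\<in>{1..k}. cr i = cr 1" using JJ by (auto simp: J_def)
  have p1b1: "p 1 \<noteq> b 1" if k2: "2 \<le> k"
  proof
    assume eq: "p 1 = b 1"
    have "delta Q R n (cochain_sum \<alpha> p b {1}) = (\<lambda>_ _. 0)"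
    proof (intro ext)
      fix q b'
      show "delta Q R n (cochain_sum \<alpha> p b {1}) q b' = 0"
      proof (cases "q \<in> Gamma Q R (Suc n) \<and> b' \<in> basis Q R \<and> parallel Q q b'")
        case False then show ?thesis by (rule delta_invalid)
      next
        case V: True
        have "delta Q R n (cochain_sum \<alpha> p b {1}) q b' = delta Q R n (\<lambda>_ _. 0) q b'"
        proof (rule delta_local)
          fix q'' bb :: "('v,'e) path" and X Y assume h: "snd q = X @ snd q'' @ Y" "snd b' = X @ snd bb @ Y"
          show "cochain_sum \<alpha> p b {1} q'' bb = 0"
            using contrib[of 1 q b' X Y] V h eq k1 by (auto simp: cochain_sum_def)
        qed
        then show ?thesis using delta_zero by simp
      qed
    qed
    moreover have "delta Q R n (cochain_sum \<alpha> p b {1}) \<noteq> (\<lambda>_ _. 0)"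
    proof -
      have "(2::nat) \<in> {1..k}" using k2 by simp
      hence a1: "{1::nat} \<noteq> {1..k}"
      proof -
        assume h2: "(2::nat) \<in> {1..k}"
        show ?thesis
        proof
          assume "{1::nat} = {1..k}"
          then have "(2::nat) \<in> {1}" using h2 by simp
          then show False by simp
        qed
      qed
      have a2: "{1::nat} \<subseteq> {1..k}" using k1 by simp
      have a3: "\<forall>j\<in>{1::nat}. \<alpha> j \<noteq> 0" using an k1 by simp
      have "{1::nat} \<subseteq> {1..k} \<and> {1::nat} \<noteq> {} \<and> {1::nat} \<noteq> {1..k} \<and> (\<forall>j\<in>{1::nat}. \<alpha> j \<noteq> 0)"
        using a1 a2 a3 by simp
      then show ?thesis by (rule irr[THEN spec, THEN spec, THEN mp])
    qed
    ultimately show False by simp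
  qed
  obtain P0 B0 where P0: "P0 \<noteq> []" and B0: "B0 \<noteq> []"
    and dec: "\<forall>i\<in>{1..k}. \<exists>X Y. snd (p i) = X @ P0 @ Y \<and> snd (b i) = X @ B0 @ Y"
  proof (cases "k = 1")
    case True
    have i1: "1 \<in> {1..k}" using k1 by simp
    show ?thesis
    proof (rule that[of "snd (p 1)" "snd (b 1)"])
      show "snd (p 1) \<noteq> []" using pP[OF i1] by simp
      show "snd (b 1) \<noteq> []" using bN[OF i1] .
      show "\<forall>i\<in>{1..k}. \<exists>X Y. snd (p i) = X @ snd (p 1) @ Y \<and> snd (b i) = X @ snd (b 1) @ Y"
      proof
        fix i assume "i \<in> {1..k}"
        hence "i = 1" using True by simp
        then show "\<exists>X Y. snd (p i) = X @ snd (p 1) @ Y \<and> snd (b i) = X @ snd (b 1) @ Y"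
          by (intro exI[of _ "[]"]) simp
      qed
    qed
  next
    case False
    then have k2: "2 \<le> k" using k1 by simp
    have i1: "1 \<in> {1..k}" using k1 by simp
    have g: "good (snd (p 1)) (snd (b 1))"
    proof -
      have par1: "parallel Q (p 1) (b 1)" using pb i1 by simp
      show ?thesis using parallel_good[OF conjunct1[OF pP[OF i1]] bP[OF i1] par1 p1b1[OF k2] conjunct2[OF pP[OF i1]] bN[OF i1]] .
    qed
    show ?thesis
    proof (rule that[of "fst (cr 1)" "snd (cr 1)"])
      show "fst (cr 1) \<noteq> []" using core_nonempty[OF g] by (simp add: cr_def)
      show "snd (cr 1) \<noteq> []" using core_nonempty2[OF g] by (simp add: cr_def)
      show "\<forall>i\<in>{1..k}. \<exists>X Y. snd (p i) = X @ fst (cr 1) @ Y \<and> snd (b i) = X @ snd (cr 1) @ Y"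
      proof
        fix i assume i: "i \<in> {1..k}"
        show "\<exists>X Y. snd (p i) = X @ fst (cr 1) @ Y \<and> snd (b i) = X @ snd (cr 1) @ Y"
        proof -
          have ci: "cr i = cr 1" using allcore i by blast
          have "\<exists>X Y. snd (p i) = X @ fst (cr i) @ Y \<and> snd (b i) = X @ snd (cr i) @ Y"
            unfolding cr_def by (rule core_decomp)
          then show ?thesis unfolding ci .
        qed
      qed
    qed
  qed
  define pt where "pt = (src_of Q (hd P0), P0)"
  define bt where "bt = (src_of Q (hd B0), B0)"
  have fd: "is_path Q pt \<and> is_path Q bt \<and> (\<exists>a c. a \<in> basis Q R \<and> c \<in> basis Q R \<and>
        composable Q pt a \<and> composable Q c pt \<and> composable Q bt a \<and> composable Q c bt \<and>
        p i = pcat c (pcat pt a) \<and> b i = pcat c (pcat bt a))" if i: "i \<in> {1..k}" for i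
  proof -
    obtain X Y where xy: "snd (p i) = X @ P0 @ Y" "snd (b i) = X @ B0 @ Y" using dec i by blast
    show ?thesis using final_decomp[OF _ _ _ P0 B0 xy] pP[OF i] pb i unfolding pt_def bt_def by blast
  qed
  have i1: "1 \<in> {1..k}" using k1 by simp
  show ?thesis
    apply (rule exI[of _ pt], rule exI[of _ bt])
    using fd i1 P0 B0 by (auto simp: pt_def bt_def)
qed

end

theorem mainTheorem12:
  fixes Q :: "('v, 'e) quiver" and R :: "('v, 'e) path set"
    and n k :: nat and \<alpha> :: "nat \<Rightarrow> 'k::field" and p b :: "nat \<Rightarrow> ('v, 'e) path"
  assumes "finite (verts Q)" and "finite (arrs Q)"
    and "\<forall>e\<in>arrs Q. src_of Q e \<in> verts Q \<and> tgt_of Q e \<in> verts Q"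
    and "monomial_rels Q R" and "triangular Q" and "finite (basis Q R)"
    and "k \<ge> 1"
    and "\<forall>i\<in>{1..k}. p i \<in> Gamma Q R n \<and> b i \<in> basis Q R \<and> parallel Q (p i) (b i)"
    and "\<forall>i\<in>{1..k}. \<alpha> i \<noteq> 0"
    and "inj_on (\<lambda>i. (p i, b i)) {1..k}"
    and "delta Q R n (cochain_sum \<alpha> p b {1..k}) = (\<lambda>_ _. 0)"
    and "\<forall>J (\<beta> :: nat \<Rightarrow> 'k). J \<subseteq> {1..k} \<and> J \<noteq> {} \<and> J \<noteq> {1..k} \<and> (\<forall>j\<in>J. \<beta> j \<noteq> 0)
           \<longrightarrow> delta Q R n (cochain_sum \<beta> p b J) \<noteq> (\<lambda>_ _. 0)"
  shows "\<exists>pt bt. is_path Q pt \<and> snd pt \<noteq> [] \<and> is_path Q bt \<and> snd bt \<noteq> [] \<and>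
     (\<forall>i\<in>{1..k}. \<exists>a c. a \<in> basis Q R \<and> c \<in> basis Q R \<and>
        composable Q pt a \<and> composable Q c pt \<and> composable Q bt a \<and> composable Q c bt \<and>
        p i = pcat c (pcat pt a) \<and> b i = pcat c (pcat bt a))"
  proof -
  interpret QS Q R by (rule QS.intro) (use assms(3,4,5) in auto)
  show ?thesis using main_locale[OF assms(7) assms(8) assms(9) assms(11) assms(12)] .
qed

end
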